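(* Let $n \geq 2$ and let $X_1, \dots, X_n$ be mutually independent nonnegative random variables with survival functions $\overline{F}_i(x) = \mathbb{P}(X_i > x)$, $i = 1, \dots, n$. Let $\boldsymbol{\theta} = (\theta_1, \dots, \theta_n) \in (0,1)^n$ with $\sum_{i=1}^n \theta_i = 1$, and let $\mathbf{I} = (I_1, \dots, I_n) \sim \mathrm{Categorical}(\boldsymbol{\theta})$ be independent of $X_1, \dots, X_n$. Suppose that for each $i \in \{1,\dots,n\}$ and every subset $\mu$ with $\{i\} \subseteq \mu \subsetneq \{1, \dots, n\}$, the condition $$\theta_{\mu} \, \overline{F}_i(x) \leq \overline{F}_i(x/\theta_{\mu}) \quad \text{for all } x \geq 0$$ is satisfied, where $\theta_\mu = \sum_{j \in \mu} \theta_j$. Then $$I_1 X_1 + \dots + I_n X_n \leq_{\mathrm{st}} \theta_1 X_1 + \dots + \theta_n X_n.$$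
   Context: $\mathbf{I} \sim \mathrm{Categorical}(\boldsymbol{\theta})$ means that almost surely exactly one component of $\mathbf{I}$ equals $1$ and all others equal $0$, with $\mathbb{P}(I_i = 1) = \theta_i$. For random variables $X, Y$, $X \leq_{\mathrm{st}} Y$ (first-order stochastic dominance) means $\mathbb{P}(X > x) \leq \mathbb{P}(Y > x)$ for all $x \in \mathbb{R}$. For a nonempty $\mu \subseteq \{1,\dots,n\}$, $\theta_\mu := \sum_{j\in\mu}\theta_j$. *)

theory Defs
  imports "HOL-Probability.Probability"
begin

definition theta_sum :: "(nat \<Rightarrow> real) \<Rightarrow> nat set \<Rightarrow> real" where
  "theta_sum \<theta> \<mu> = (\<Sum>j\<in>\<mu>. \<theta> j)"

end

theory Submission
  imports Defs
begin


definition fpol :: "(nat \<Rightarrow> real) \<Rightarrow> (nat \<Rightarrow> real) \<Rightarrow> nat set \<Rightarrow> real \<Rightarrow> real \<Rightarrow> real" where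
  "fpol \<theta> c C b z = (\<Prod>k\<in>C. z - b * c k) - (\<Sum>i\<in>C. \<theta> i * c i * (\<Prod>k\<in>C-{i}. z - b * c k))"

definition hur :: "(nat \<Rightarrow> real) \<Rightarrow> (nat \<Rightarrow> real) \<Rightarrow> nat set \<Rightarrow> real \<Rightarrow> real \<Rightarrow> real" where
  "hur \<theta> c B a z = (\<Sum>\<nu>\<in>Pow B. (a + theta_sum \<theta> \<nu>) ^ card \<nu> * (\<Prod>i\<in>\<nu>. c i)
       * fpol \<theta> c (B - \<nu>) (a + theta_sum \<theta> \<nu>) z)"

lemma sum_swap_diff:
  assumes "finite C"
  shows "(\<Sum>i\<in>C. \<Sum>k\<in>C-{i}. h i k) = (\<Sum>k\<in>C. \<Sum>i\<in>C-{k}. h i k)"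
proof -
  have "(\<Sum>i\<in>C. \<Sum>k\<in>C-{i}. h i k) = (\<Sum>i\<in>C. \<Sum>k\<in>{k. k \<in> C \<and> i \<noteq> k}. h i k)"
    by (intro sum.cong) auto
  also have "\<dots> = (\<Sum>k\<in>C. \<Sum>i\<in>{i. i \<in> C \<and> i \<noteq> k}. h i k)"
    by (rule sum.swap_restrict[OF assms assms])
  also have "\<dots> = (\<Sum>k\<in>C. \<Sum>i\<in>C-{k}. h i k)"
    by (intro sum.cong) auto
  finally show ?thesis .
qed

lemma prod_deriv_lin:
  assumes "finite C"
  shows "((\<lambda>z. \<Prod>k\<in>C. z - b * c k) has_field_derivative (\<Sum>k\<in>C. \<Prod>y\<in>C-{k}. z - b * c y)) (at z)"
proof -
  have "((\<lambda>u. \<Prod>k\<in>C. (\<lambda>k u. u - b * c k) k u) has_field_derivative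
     (\<Sum>k\<in>C. (\<lambda>k. 1) k * (\<Prod>y\<in>C-{k}. (\<lambda>k u. u - b * c k) y z))) (at z)"
    by (rule has_field_derivative_prod) (auto intro!: derivative_eq_intros)
  then show ?thesis by simp
qed

lemma fpol_deriv:
  assumes "finite C"
  shows "((\<lambda>z. fpol \<theta> c C b z) has_field_derivative (\<Sum>k\<in>C. fpol \<theta> c (C-{k}) b z)) (at z)"
proof -
  have d: "((\<lambda>z. fpol \<theta> c C b z) has_field_derivative
     (\<Sum>k\<in>C. \<Prod>y\<in>C-{k}. z - b * c y) - (\<Sum>i\<in>C. \<theta> i * c i * (\<Sum>k\<in>C-{i}. \<Prod>y\<in>C-{i}-{k}. z - b * c y))) (at z)"
    unfolding fpol_def
    using assms
    by (intro DERIV_diff DERIV_sum DERIV_cmult prod_deriv_lin) auto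
  have "(\<Sum>i\<in>C. \<theta> i * c i * (\<Sum>k\<in>C-{i}. \<Prod>y\<in>C-{i}-{k}. z - b * c y))
      = (\<Sum>i\<in>C. \<Sum>k\<in>C-{i}. \<theta> i * c i * (\<Prod>y\<in>C-{k}-{i}. z - b * c y))"
    by (simp add: sum_distrib_left Diff_insert2[symmetric] insert_commute)
  also have "\<dots> = (\<Sum>k\<in>C. \<Sum>i\<in>C-{k}. \<theta> i * c i * (\<Prod>y\<in>C-{k}-{i}. z - b * c y))"
    using assms by (rule sum_swap_diff)
  finally have e: "(\<Sum>i\<in>C. \<theta> i * c i * (\<Sum>k\<in>C-{i}. \<Prod>y\<in>C-{i}-{k}. z - b * c y))
      = (\<Sum>k\<in>C. \<Sum>i\<in>C-{k}. \<theta> i * c i * (\<Prod>y\<in>C-{k}-{i}. z - b * c y))" .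
  have "(\<Sum>k\<in>C. \<Prod>y\<in>C-{k}. z - b * c y) - (\<Sum>i\<in>C. \<theta> i * c i * (\<Sum>k\<in>C-{i}. \<Prod>y\<in>C-{i}-{k}. z - b * c y))
      = (\<Sum>k\<in>C. fpol \<theta> c (C-{k}) b z)"
    unfolding e fpol_def by (simp add: sum_subtractf)
  with d show ?thesis by simp
qed

lemma hur_deriv:
  assumes "finite B"
  shows "((\<lambda>z. hur \<theta> c B a z) has_field_derivative (\<Sum>k\<in>B. hur \<theta> c (B-{k}) a z)) (at z)"
proof -
  let ?b = "\<lambda>\<nu>. a + theta_sum \<theta> \<nu>"
  let ?K = "\<lambda>\<nu>. (a + theta_sum \<theta> \<nu>) ^ card \<nu> * (\<Prod>i\<in>\<nu>. c i)"
  have d: "((\<lambda>z. hur \<theta> c B a z) has_field_derivative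
      (\<Sum>\<nu>\<in>Pow B. ?K \<nu> * (\<Sum>k\<in>B-\<nu>. fpol \<theta> c (B-\<nu>-{k}) (?b \<nu>) z))) (at z)"
    unfolding hur_def using assms
    by (intro DERIV_sum DERIV_cmult fpol_deriv) (auto intro: finite_subset)
  have "(\<Sum>\<nu>\<in>Pow B. ?K \<nu> * (\<Sum>k\<in>B-\<nu>. fpol \<theta> c (B-\<nu>-{k}) (?b \<nu>) z))
      = (\<Sum>\<nu>\<in>Pow B. \<Sum>k\<in>{k. k \<in> B \<and> k \<notin> \<nu>}. ?K \<nu> * fpol \<theta> c (B-\<nu>-{k}) (?b \<nu>) z)"
    by (intro sum.cong) (auto simp: sum_distrib_left intro!: sum.cong)
  also have "\<dots> = (\<Sum>k\<in>B. \<Sum>\<nu>\<in>{\<nu>. \<nu> \<in> Pow B \<and> k \<notin> \<nu>}. ?K \<nu> * fpol \<theta> c (B-\<nu>-{k}) (?b \<nu>) z)"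
    by (rule sum.swap_restrict) (use assms in auto)
  also have "\<dots> = (\<Sum>k\<in>B. hur \<theta> c (B-{k}) a z)"
    unfolding hur_def
  proof (rule sum.cong[OF refl])
    fix k assume "k \<in> B"
    have "{\<nu>. \<nu> \<in> Pow B \<and> k \<notin> \<nu>} = Pow (B-{k})" by auto
    moreover have "\<And>\<nu>. B-\<nu>-{k} = B-{k}-\<nu>" by auto
    ultimately show "(\<Sum>\<nu>\<in>{\<nu>. \<nu> \<in> Pow B \<and> k \<notin> \<nu>}. ?K \<nu> * fpol \<theta> c (B-\<nu>-{k}) (?b \<nu>) z) =
         (\<Sum>\<nu>\<in>Pow (B - {k}). ?K \<nu> * fpol \<theta> c (B - {k} - \<nu>) (?b \<nu>) z)" by simp
  qed
  finally show ?thesis using d by simp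
qed

lemma delta_identity:
  assumes "finite B"
  shows "m < card B \<Longrightarrow> (\<Sum>\<nu>\<in>Pow B. (-1) ^ card (B - \<nu>) * (a + theta_sum \<theta> \<nu>) ^ m) = (0::real)"
  using assms
proof (induction B arbitrary: a m rule: finite_induct)
  case empty
  then show ?case by simp
next
  case (insert j B)
  have inj: "inj_on (insert j) (Pow B)"
    using insert.hyps by (auto simp: inj_on_def)
  have disj: "Pow B \<inter> insert j ` Pow B = {}" using insert.hyps by auto
  have finB: "\<And>\<nu>. \<nu> \<in> Pow B \<Longrightarrow> finite \<nu>" using insert.hyps by (auto intro: finite_subset)
  have c1: "\<And>\<nu>. \<nu> \<in> Pow B \<Longrightarrow> card (insert j B - \<nu>) = Suc (card (B - \<nu>))"
  proof -
    fix \<nu> assume "\<nu> \<in> Pow B"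
    then have "insert j B - \<nu> = insert j (B - \<nu>)" using insert.hyps by auto
    then show "card (insert j B - \<nu>) = Suc (card (B - \<nu>))" using insert.hyps by simp
  qed
  have c2: "\<And>\<nu>. \<nu> \<in> Pow B \<Longrightarrow> card (insert j B - insert j \<nu>) = card (B - \<nu>)"
  proof -
    fix \<nu> assume "\<nu> \<in> Pow B"
    then have "insert j B - insert j \<nu> = B - \<nu>" using insert.hyps by auto
    then show "card (insert j B - insert j \<nu>) = card (B - \<nu>)" by simp
  qed
  have t2: "\<And>\<nu>. \<nu> \<in> Pow B \<Longrightarrow> theta_sum \<theta> (insert j \<nu>) = \<theta> j + theta_sum \<theta> \<nu>"
    using insert.hyps finB unfolding theta_sum_def by (subst sum.insert) auto
  have "(\<Sum>\<nu>\<in>Pow (insert j B). (-1) ^ card (insert j B - \<nu>) * (a + theta_sum \<theta> \<nu>) ^ m)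
      = (\<Sum>\<nu>\<in>Pow B. (-1) ^ card (insert j B - \<nu>) * (a + theta_sum \<theta> \<nu>) ^ m)
       + (\<Sum>\<nu>\<in>insert j ` Pow B. (-1) ^ card (insert j B - \<nu>) * (a + theta_sum \<theta> \<nu>) ^ m)"
    unfolding Pow_insert using insert.hyps disj by (intro sum.union_disjoint) auto
  also have "(\<Sum>\<nu>\<in>insert j ` Pow B. (-1) ^ card (insert j B - \<nu>) * (a + theta_sum \<theta> \<nu>) ^ m)
      = (\<Sum>\<nu>\<in>Pow B. (-1) ^ card (B - \<nu>) * ((a + theta_sum \<theta> \<nu>) + \<theta> j) ^ m)"
  proof (subst sum.reindex[OF inj], rule sum.cong[OF refl])
    fix \<nu> assume "\<nu> \<in> Pow B"
    then show "((\<lambda>\<nu>. (-1) ^ card (insert j B - \<nu>) * (a + theta_sum \<theta> \<nu>) ^ m) \<circ> insert j) \<nu>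
        = (-1) ^ card (B - \<nu>) * ((a + theta_sum \<theta> \<nu>) + \<theta> j) ^ m"
      using c2[of \<nu>] t2[of \<nu>] by (simp only: o_def) (simp add: add_ac)
  qed
  also have "(\<Sum>\<nu>\<in>Pow B. (-1) ^ card (insert j B - \<nu>) * (a + theta_sum \<theta> \<nu>) ^ m)
      = (\<Sum>\<nu>\<in>Pow B. - ((-1) ^ card (B - \<nu>) * (a + theta_sum \<theta> \<nu>) ^ m))"
    by (intro sum.cong) (auto simp: c1)
  finally have eq: "(\<Sum>\<nu>\<in>Pow (insert j B). (-1) ^ card (insert j B - \<nu>) * (a + theta_sum \<theta> \<nu>) ^ m)
     = (\<Sum>\<nu>\<in>Pow B. (-1) ^ card (B - \<nu>) * (((a + theta_sum \<theta> \<nu>) + \<theta> j) ^ m - (a + theta_sum \<theta> \<nu>) ^ m))"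
    by (simp add: sum_negf[symmetric] sum.distrib[symmetric] algebra_simps)
  have bin: "\<And>y. (y + \<theta> j) ^ m - y ^ m = (\<Sum>k<m. of_nat (m choose k) * y ^ k * \<theta> j ^ (m - k))"
  proof -
    fix y :: real
    have "(y + \<theta> j) ^ m = (\<Sum>k\<le>m. of_nat (m choose k) * y ^ k * \<theta> j ^ (m - k))"
      by (rule binomial_ring)
    also have "\<dots> = (\<Sum>k<m. of_nat (m choose k) * y ^ k * \<theta> j ^ (m - k)) + y ^ m"
      by (simp add: lessThan_Suc_atMost[symmetric])
    finally show "(y + \<theta> j) ^ m - y ^ m = (\<Sum>k<m. of_nat (m choose k) * y ^ k * \<theta> j ^ (m - k))" by simp
  qed
  have "(\<Sum>\<nu>\<in>Pow B. (-1) ^ card (B - \<nu>) * (((a + theta_sum \<theta> \<nu>) + \<theta> j) ^ m - (a + theta_sum \<theta> \<nu>) ^ m))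
     = (\<Sum>k<m. of_nat (m choose k) * \<theta> j ^ (m - k) * (\<Sum>\<nu>\<in>Pow B. (-1) ^ card (B - \<nu>) * (a + theta_sum \<theta> \<nu>) ^ k))"
    unfolding bin by (simp add: sum_distrib_left mult_ac sum.swap[of _ "Pow B"])
  also have "\<dots> = 0"
  proof (intro sum.neutral ballI)
    fix k assume "k \<in> {..<m}"
    then have "k < card B" using insert.prems insert.hyps by simp
    then show "of_nat (m choose k) * \<theta> j ^ (m - k) * (\<Sum>\<nu>\<in>Pow B. (-1) ^ card (B - \<nu>) * (a + theta_sum \<theta> \<nu>) ^ k) = 0"
      using insert.IH by simp
  qed
  finally show ?case using eq by simp
qed

lemma fpol_empty[simp]: "fpol \<theta> c {} b z = 1"
  by (simp add: fpol_def)

lemma fpol_zero: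
  assumes "finite C" "C \<noteq> {}"
  shows "fpol \<theta> c C b 0 = - ((-b) ^ (card C - 1) * (\<Prod>k\<in>C. c k) * (b + theta_sum \<theta> C))"
proof -
  have p1: "(\<Prod>k\<in>C. 0 - b * c k) = (-b) ^ card C * (\<Prod>k\<in>C. c k)"
  proof -
    have "(\<Prod>k\<in>C. 0 - b * c k) = (\<Prod>k\<in>C. (-b) * c k)" by simp
    also have "\<dots> = (-b) ^ card C * (\<Prod>k\<in>C. c k)" by (subst prod.distrib) simp
    finally show ?thesis .
  qed
  have p2: "\<theta> i * c i * (\<Prod>k\<in>C-{i}. 0 - b * c k) = \<theta> i * ((-b) ^ (card C - 1) * (\<Prod>k\<in>C. c k))"
    if "i \<in> C" for i
  proof -
    have "(\<Prod>k\<in>C-{i}. 0 - b * c k) = (\<Prod>k\<in>C-{i}. (-b) * c k)" by simp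
    also have "\<dots> = (-b) ^ card (C-{i}) * (\<Prod>k\<in>C-{i}. c k)" by (subst prod.distrib) simp
    also have "card (C-{i}) = card C - 1" using assms that by simp
    finally have "(\<Prod>k\<in>C-{i}. 0 - b * c k) = (-b) ^ (card C - 1) * (\<Prod>k\<in>C-{i}. c k)" .
    moreover have "(\<Prod>k\<in>C. c k) = c i * (\<Prod>k\<in>C-{i}. c k)"
      using assms that by (simp add: prod.remove)
    ultimately show ?thesis by simp
  qed
  have "card C = Suc (card C - 1)" using assms by (simp add: card_gt_0_iff)
  then have p3: "(-b) ^ card C = (-b) * (-b) ^ (card C - 1)" by (metis power_Suc)
  have s2: "(\<Sum>i\<in>C. \<theta> i * c i * (\<Prod>k\<in>C-{i}. 0 - b * c k))
      = theta_sum \<theta> C * ((-b) ^ (card C - 1) * (\<Prod>k\<in>C. c k))"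
  proof -
    have "(\<Sum>i\<in>C. \<theta> i * c i * (\<Prod>k\<in>C-{i}. 0 - b * c k))
        = (\<Sum>i\<in>C. \<theta> i * ((-b) ^ (card C - 1) * (\<Prod>k\<in>C. c k)))"
      by (rule sum.cong[OF refl]) (rule p2)
    also have "\<dots> = theta_sum \<theta> C * ((-b) ^ (card C - 1) * (\<Prod>k\<in>C. c k))"
      by (simp add: theta_sum_def sum_distrib_right)
    finally show ?thesis .
  qed
  have "fpol \<theta> c C b 0 = (-b) ^ card C * (\<Prod>k\<in>C. c k) - theta_sum \<theta> C * ((-b) ^ (card C - 1) * (\<Prod>k\<in>C. c k))"
    unfolding fpol_def p1[symmetric] s2[symmetric] ..
  also have "\<dots> = - ((-b) ^ (card C - 1) * (\<Prod>k\<in>C. c k) * (b + theta_sum \<theta> C))"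
    unfolding p3 by (simp add: algebra_simps)
  finally show ?thesis .
qed

lemma aux_alg: "(y::real) ^ m * P1 * (- ((-y) ^ k * P2 * S)) = P1 * P2 * S * (- ((-1) ^ k) * (y ^ m * y ^ k))"
proof -
  have "(-y) ^ k = (-1) ^ k * y ^ k" by (rule power_minus)
  then show ?thesis by (simp only:) (simp add: mult_ac)
qed

lemma hur_zero:
  assumes "finite B" "B \<noteq> {}"
  shows "hur \<theta> c B a 0 = 0"
proof -
  let ?n = "card B"
  have trm: "(a + theta_sum \<theta> \<nu>) ^ card \<nu> * (\<Prod>i\<in>\<nu>. c i) * fpol \<theta> c (B - \<nu>) (a + theta_sum \<theta> \<nu>) 0
      = (\<Prod>i\<in>B. c i) * (a + theta_sum \<theta> B) * ((-1) ^ card (B - \<nu>) * (a + theta_sum \<theta> \<nu>) ^ (?n - 1))"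
    if nu: "\<nu> \<in> Pow B" for \<nu>
  proof (cases "\<nu> = B")
    case True
    have "?n = Suc (?n - 1)" using assms by (simp add: card_gt_0_iff)
    then have "(a + theta_sum \<theta> B) ^ ?n = (a + theta_sum \<theta> B) * (a + theta_sum \<theta> B) ^ (?n - 1)"
      by (metis power_Suc)
    then show ?thesis using True by simp
  next
    case False
    let ?y = "a + theta_sum \<theta> \<nu>"
    have fin: "finite \<nu>" "finite (B - \<nu>)" using nu assms by (auto intro: finite_subset)
    have ne: "B - \<nu> \<noteq> {}" using False nu by auto
    obtain k where k: "card (B - \<nu>) = Suc k" using ne fin by (metis card_gt_0_iff not0_implies_Suc not_gr0)
    have ts: "theta_sum \<theta> \<nu> + theta_sum \<theta> (B - \<nu>) = theta_sum \<theta> B"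
      unfolding theta_sum_def using nu assms by (simp add: sum.subset_diff[of \<nu> B] add_ac)
    have pc: "(\<Prod>i\<in>\<nu>. c i) * (\<Prod>i\<in>B - \<nu>. c i) = (\<Prod>i\<in>B. c i)"
      using nu assms by (simp add: prod.subset_diff[of \<nu> B] mult_ac)
    have cd: "card \<nu> + card (B - \<nu>) = ?n"
      using nu assms by (metis PowD card_Diff_subset card_mono diff_add_inverse le_add_diff_inverse fin(1))
    have cn: "?n - 1 = card \<nu> + k" using cd k by simp
    have "fpol \<theta> c (B - \<nu>) ?y 0 = - ((-?y) ^ k * (\<Prod>i\<in>B - \<nu>. c i) * (a + theta_sum \<theta> B))"
      using fpol_zero[OF fin(2) ne, of \<theta> c ?y] k ts by (simp add: add_ac)
    then have "?y ^ card \<nu> * (\<Prod>i\<in>\<nu>. c i) * fpol \<theta> c (B - \<nu>) ?y 0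
        = (\<Prod>i\<in>\<nu>. c i) * (\<Prod>i\<in>B - \<nu>. c i) * (a + theta_sum \<theta> B) * (- ((-1) ^ k) * (?y ^ card \<nu> * ?y ^ k))"
      by (simp only: aux_alg)
    also have "\<dots> = (\<Prod>i\<in>B. c i) * (a + theta_sum \<theta> B) * ((-1) ^ card (B - \<nu>) * ?y ^ (?n - 1))"
      unfolding pc k cn by (simp add: power_add)
    finally show ?thesis .
  qed
  have "hur \<theta> c B a 0 = (\<Sum>\<nu>\<in>Pow B. (\<Prod>i\<in>B. c i) * (a + theta_sum \<theta> B) *
          ((-1) ^ card (B - \<nu>) * (a + theta_sum \<theta> \<nu>) ^ (?n - 1)))"
    unfolding hur_def by (rule sum.cong[OF refl]) (rule trm)
  also have "\<dots> = (\<Prod>i\<in>B. c i) * (a + theta_sum \<theta> B) *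
          (\<Sum>\<nu>\<in>Pow B. (-1) ^ card (B - \<nu>) * (a + theta_sum \<theta> \<nu>) ^ (?n - 1))"
    by (simp add: sum_distrib_left)
  also have "(\<Sum>\<nu>\<in>Pow B. (-1) ^ card (B - \<nu>) * (a + theta_sum \<theta> \<nu>) ^ (?n - 1)) = 0"
    using assms by (intro delta_identity) (auto simp: card_gt_0_iff)
  finally show ?thesis by simp
qed

lemma hur_identity_aux:
  "\<forall>(B::nat set) a z. finite B \<longrightarrow> card B = n \<longrightarrow> hur \<theta> c B a z = z ^ n"
proof (induction n)
  case 0
  then show ?case by (simp add: hur_def theta_sum_def)
next
  case (Suc n)
  show ?case
  proof (intro allI impI)
    fix B :: "nat set" and a z :: real assume fin: "finite B" and cB: "card B = Suc n"
    then have ne: "B \<noteq> {}" by auto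
    define g where "g = (\<lambda>z. hur \<theta> c B a z - z ^ Suc n)"
    have "\<forall>x. DERIV g x :> 0"
    proof
      fix x
      have "DERIV g x :> (\<Sum>k\<in>B. hur \<theta> c (B-{k}) a x) - real (Suc n) * x ^ (Suc n - Suc 0)"
        unfolding g_def by (intro DERIV_diff hur_deriv fin DERIV_pow)
      moreover have "(\<Sum>k\<in>B. hur \<theta> c (B-{k}) a x) = (\<Sum>k\<in>B. x ^ n)"
        using Suc.IH fin cB by (intro sum.cong refl) auto
      ultimately show "DERIV g x :> 0" using cB by simp
    qed
    then have "g z = g 0" by (rule DERIV_isconst_all)
    then show "hur \<theta> c B a z = z ^ Suc n" unfolding g_def using hur_zero[OF fin ne] by simp
  qed
qed

lemma hur_identity:
  "finite B \<Longrightarrow> hur \<theta> c B a z = z ^ card B"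
  using hur_identity_aux by blast



definition wsum :: "nat set \<Rightarrow> (nat \<Rightarrow> real set) \<Rightarrow> (nat \<Rightarrow> real \<Rightarrow> real) \<Rightarrow> ((nat \<Rightarrow> real) \<Rightarrow> real) \<Rightarrow> real" where
  "wsum B V w g = (\<Sum>l\<in>PiE B V. (\<Prod>i\<in>B. w i (l i)) * g l)"

lemma sum_PiE_split:
  fixes w :: "nat \<Rightarrow> real \<Rightarrow> real"
  assumes fin: "finite B" and sub: "\<nu> \<subseteq> B" and finV: "\<And>i. i \<in> B \<Longrightarrow> finite (V i)"
    and P: "\<And>l l'. (\<And>i. i \<in> \<nu> \<Longrightarrow> l i = l' i) \<Longrightarrow> P l = P l'"
    and Q: "\<And>l l'. (\<And>i. i \<in> B - \<nu> \<Longrightarrow> l i = l' i) \<Longrightarrow> Q l = Q l'"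
  shows "wsum B V w (\<lambda>l. P l * Q l) = wsum \<nu> V w P * wsum (B - \<nu>) V w Q"
proof -
  let ?m = "\<lambda>(f, g). (\<lambda>i. if i \<in> \<nu> then f i else g i)"
  let ?r = "\<lambda>l. (restrict l \<nu>, restrict l (B - \<nu>))"
  have fnu: "finite \<nu>" using fin sub by (rule rev_finite_subset)
  have finP: "finite (PiE \<nu> V)" "finite (PiE (B - \<nu>) V)"
    using finV sub by (auto intro!: finite_PiE fnu fin)
  have "wsum \<nu> V w P * wsum (B - \<nu>) V w Q
     = (\<Sum>fg\<in>PiE \<nu> V \<times> PiE (B - \<nu>) V. ((\<Prod>i\<in>\<nu>. w i (fst fg i)) * P (fst fg)) * ((\<Prod>i\<in>B-\<nu>. w i (snd fg i)) * Q (snd fg)))"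
    unfolding wsum_def sum_product sum.cartesian_product by (simp add: case_prod_beta)
  also have "\<dots> = (\<Sum>l\<in>PiE B V. (\<Prod>i\<in>B. w i (l i)) * (P l * Q l))"
  proof (rule sum.reindex_bij_witness[of _ ?r ?m])
    fix l assume l: "l \<in> PiE B V"
    show "?m (?r l) = l"
      using l sub by (auto simp: PiE_def extensional_def fun_eq_iff)
    show "?r l \<in> PiE \<nu> V \<times> PiE (B - \<nu>) V"
      using l sub by (auto simp: PiE_def extensional_def)
  next
    fix fg assume fg: "fg \<in> PiE \<nu> V \<times> PiE (B - \<nu>) V"
    obtain f g where fgd: "fg = (f, g)" by force
    with fg have f: "f \<in> PiE \<nu> V" and g: "g \<in> PiE (B - \<nu>) V" by auto
    show "?r (?m fg) = fg"
      using f g unfolding fgd by (auto simp: PiE_def extensional_def fun_eq_iff)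
    show "?m fg \<in> PiE B V"
      using f g sub unfolding fgd by (auto simp: PiE_def extensional_def Pi_def)
    let ?l = "?m fg"
    have "(\<Prod>i\<in>B. w i (?l i)) = (\<Prod>i\<in>\<nu>. w i (?l i)) * (\<Prod>i\<in>B-\<nu>. w i (?l i))"
      using fin sub by (simp add: prod.subset_diff[of \<nu> B] mult_ac)
    also have "\<dots> = (\<Prod>i\<in>\<nu>. w i (f i)) * (\<Prod>i\<in>B-\<nu>. w i (g i))"
      unfolding fgd by (auto intro!: arg_cong2[where f="(*)"] prod.cong)
    finally have pr: "(\<Prod>i\<in>B. w i (?l i)) = (\<Prod>i\<in>\<nu>. w i (f i)) * (\<Prod>i\<in>B-\<nu>. w i (g i))" .
    have "P ?l = P f" by (rule P) (auto simp: fgd)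
    moreover have "Q ?l = Q g" by (rule Q) (auto simp: fgd)
    ultimately show "(\<Prod>i\<in>B. w i (?l i)) * (P ?l * Q ?l) =
        (\<Prod>i\<in>\<nu>. w i (fst fg i)) * P (fst fg) * ((\<Prod>i\<in>B - \<nu>. w i (snd fg i)) * Q (snd fg))"
      using pr unfolding fgd by (simp add: mult_ac)
  qed
  finally show ?thesis unfolding wsum_def by simp
qed

definition goodset :: "(nat \<Rightarrow> real) \<Rightarrow> real \<Rightarrow> nat set \<Rightarrow> (nat \<Rightarrow> real) \<Rightarrow> bool" where
  "goodset \<theta> a \<nu> l \<longleftrightarrow> (\<forall>i\<in>\<nu>. l i \<le> a + theta_sum \<theta> \<nu>)"

definition Nset :: "(nat \<Rightarrow> real) \<Rightarrow> nat set \<Rightarrow> real \<Rightarrow> (nat \<Rightarrow> real) \<Rightarrow> bool" where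
  "Nset \<theta> B a l \<longleftrightarrow> (\<forall>\<nu>\<subseteq>B. \<nu> \<noteq> {} \<longrightarrow> \<not> goodset \<theta> a \<nu> l)"

definition Mx :: "(nat \<Rightarrow> real) \<Rightarrow> nat set \<Rightarrow> real \<Rightarrow> (nat \<Rightarrow> real) \<Rightarrow> nat set" where
  "Mx \<theta> B a l = \<Union>{\<nu>. \<nu> \<subseteq> B \<and> goodset \<theta> a \<nu> l}"

lemma theta_mono:
  assumes "finite B" "\<nu> \<subseteq> \<nu>'" "\<nu>' \<subseteq> B" "\<And>i. i \<in> B \<Longrightarrow> \<theta> i \<ge> 0"
  shows "theta_sum \<theta> \<nu> \<le> theta_sum \<theta> \<nu>'"
  unfolding theta_sum_def using assms by (intro sum_mono2) (auto intro: finite_subset)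

lemma theta_union:
  assumes "finite \<nu>" "finite \<nu>'" "\<nu> \<inter> \<nu>' = {}"
  shows "theta_sum \<theta> (\<nu> \<union> \<nu>') = theta_sum \<theta> \<nu> + theta_sum \<theta> \<nu>'"
  unfolding theta_sum_def using assms by (rule sum.union_disjoint)

lemma Mx_sub: "Mx \<theta> B a l \<subseteq> B"
  unfolding Mx_def by auto

lemma good_sub_Mx: "\<nu> \<subseteq> B \<Longrightarrow> goodset \<theta> a \<nu> l \<Longrightarrow> \<nu> \<subseteq> Mx \<theta> B a l"
  unfolding Mx_def by auto

lemma Mx_good:
  assumes "finite B" "\<And>i. i \<in> B \<Longrightarrow> \<theta> i \<ge> 0"
  shows "goodset \<theta> a (Mx \<theta> B a l) l"
  unfolding goodset_def
proof
  fix i assume "i \<in> Mx \<theta> B a l"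
  then obtain \<nu> where nu: "\<nu> \<subseteq> B" "goodset \<theta> a \<nu> l" "i \<in> \<nu>" unfolding Mx_def by auto
  then have "l i \<le> a + theta_sum \<theta> \<nu>" unfolding goodset_def by auto
  also have "theta_sum \<theta> \<nu> \<le> theta_sum \<theta> (Mx \<theta> B a l)"
    using assms nu Mx_sub[of \<theta> B a l] by (intro theta_mono good_sub_Mx) auto
  finally show "l i \<le> a + theta_sum \<theta> (Mx \<theta> B a l)" by simp
qed

lemma Mx_iff:
  assumes fin: "finite B" and nn: "\<And>i. i \<in> B \<Longrightarrow> \<theta> i \<ge> 0" and sub: "\<nu> \<subseteq> B"
  shows "Mx \<theta> B a l = \<nu> \<longleftrightarrow> goodset \<theta> a \<nu> l \<and> Nset \<theta> (B - \<nu>) (a + theta_sum \<theta> \<nu>) l"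
proof
  assume M: "Mx \<theta> B a l = \<nu>"
  have "goodset \<theta> a (Mx \<theta> B a l) l" by (rule Mx_good[OF fin nn])
  then have g: "goodset \<theta> a \<nu> l" using M by simp
  have "Nset \<theta> (B - \<nu>) (a + theta_sum \<theta> \<nu>) l"
    unfolding Nset_def
  proof (intro allI impI notI)
    fix \<nu>' assume s: "\<nu>' \<subseteq> B - \<nu>" and ne: "\<nu>' \<noteq> {}" and g': "goodset \<theta> (a + theta_sum \<theta> \<nu>) \<nu>' l"
    have fn: "finite \<nu>" "finite \<nu>'" using fin sub s by (auto intro: finite_subset)
    have dis: "\<nu> \<inter> \<nu>' = {}" using s by auto
    have tu: "theta_sum \<theta> (\<nu> \<union> \<nu>') = theta_sum \<theta> \<nu> + theta_sum \<theta> \<nu>'"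
      using fn dis by (rule theta_union)
    have "goodset \<theta> a (\<nu> \<union> \<nu>') l"
      unfolding goodset_def
    proof
      fix i assume "i \<in> \<nu> \<union> \<nu>'"
      then show "l i \<le> a + theta_sum \<theta> (\<nu> \<union> \<nu>')"
      proof
        assume i: "i \<in> \<nu>"
        then have "l i \<le> a + theta_sum \<theta> \<nu>" using g unfolding goodset_def by auto
        also have "theta_sum \<theta> \<nu> \<le> theta_sum \<theta> (\<nu> \<union> \<nu>')"
          using fin sub s nn by (intro theta_mono) auto
        finally show ?thesis by simp
      next
        assume i: "i \<in> \<nu>'"
        then show ?thesis using g' tu unfolding goodset_def by (simp add: add_ac)
      qed
    qed
    then have "\<nu> \<union> \<nu>' \<subseteq> Mx \<theta> B a l" using sub s by (intro good_sub_Mx) auto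
    then show False using M ne s by auto
  qed
  with g show "goodset \<theta> a \<nu> l \<and> Nset \<theta> (B - \<nu>) (a + theta_sum \<theta> \<nu>) l" by simp
next
  assume H: "goodset \<theta> a \<nu> l \<and> Nset \<theta> (B - \<nu>) (a + theta_sum \<theta> \<nu>) l"
  have s1: "\<nu> \<subseteq> Mx \<theta> B a l" using H sub by (intro good_sub_Mx) auto
  show "Mx \<theta> B a l = \<nu>"
  proof (rule ccontr)
    assume ne: "Mx \<theta> B a l \<noteq> \<nu>"
    let ?M = "Mx \<theta> B a l"
    let ?d = "?M - \<nu>"
    have dne: "?d \<noteq> {}" using ne s1 by auto
    have ds: "?d \<subseteq> B - \<nu>" using Mx_sub[of \<theta> B a l] by auto
    have fn: "finite \<nu>" "finite ?d" using fin sub ds by (auto intro: finite_subset)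
    have eqM: "?M = \<nu> \<union> ?d" using s1 by auto
    have tu: "theta_sum \<theta> ?M = theta_sum \<theta> \<nu> + theta_sum \<theta> ?d"
      using theta_union[OF fn, of \<theta>] eqM by auto
    have "goodset \<theta> a (Mx \<theta> B a l) l" by (rule Mx_good[OF fin nn])
    then have "goodset \<theta> (a + theta_sum \<theta> \<nu>) ?d l"
      using tu unfolding goodset_def by (auto simp: add_ac)
    then show False using H ds dne unfolding Nset_def by blast
  qed
qed

lemma goodset_prod:
  assumes "finite \<nu>"
  shows "(if goodset \<theta> a \<nu> l then 1 else 0) = (\<Prod>i\<in>\<nu>. (if l i \<le> a + theta_sum \<theta> \<nu> then 1 else 0::real))"
proof (cases "goodset \<theta> a \<nu> l")
  case True
  then show ?thesis unfolding goodset_def by (auto intro!: prod.neutral[symmetric])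
next
  case False
  then obtain i where "i \<in> \<nu>" "\<not> l i \<le> a + theta_sum \<theta> \<nu>" unfolding goodset_def by auto
  then have "(\<Prod>i\<in>\<nu>. (if l i \<le> a + theta_sum \<theta> \<nu> then 1 else 0::real)) = 0"
    using assms by (auto simp: prod_zero_iff)
  then show ?thesis using False by simp
qed

lemma goodset_cong: "(\<And>i. i \<in> \<nu> \<Longrightarrow> l i = l' i) \<Longrightarrow> goodset \<theta> a \<nu> l = goodset \<theta> a \<nu> l'"
  unfolding goodset_def by auto

lemma Nset_cong: "(\<And>i. i \<in> B \<Longrightarrow> l i = l' i) \<Longrightarrow> Nset \<theta> B a l = Nset \<theta> B a l'"
proof -
  assume H: "\<And>i. i \<in> B \<Longrightarrow> l i = l' i"
  have g: "\<And>\<nu>. \<nu> \<subseteq> B \<Longrightarrow> goodset \<theta> a \<nu> l = goodset \<theta> a \<nu> l'"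
    using H by (intro goodset_cong) auto
  show ?thesis unfolding Nset_def using g by blast
qed

lemma wsum_one:
  assumes "finite B" "\<And>i. i \<in> B \<Longrightarrow> finite (V i)" "\<And>i. i \<in> B \<Longrightarrow> (\<Sum>v\<in>V i. w i v) = 1"
  shows "wsum B V w (\<lambda>l. 1) = 1"
proof -
  have "wsum B V w (\<lambda>l. 1) = (\<Prod>i\<in>B. \<Sum>v\<in>V i. w i v)"
    unfolding wsum_def using assms prod_sum_PiE[of B V "\<lambda>i v. w i v"] by simp
  also have "\<dots> = 1" using assms by simp
  finally show ?thesis .
qed

lemma wsum_cdf:
  assumes "finite \<nu>" "\<And>i. i \<in> \<nu> \<Longrightarrow> finite (V i)"
    "\<And>i. i \<in> \<nu> \<Longrightarrow> (\<Sum>v\<in>{v\<in>V i. v \<le> t}. w i v) = c i * t"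
  shows "wsum \<nu> V w (\<lambda>l. \<Prod>i\<in>\<nu>. (if l i \<le> t then 1 else 0)) = t ^ card \<nu> * (\<Prod>i\<in>\<nu>. c i)"
proof -
  have "wsum \<nu> V w (\<lambda>l. \<Prod>i\<in>\<nu>. (if l i \<le> t then 1 else 0))
      = (\<Sum>l\<in>PiE \<nu> V. \<Prod>i\<in>\<nu>. w i (l i) * (if l i \<le> t then 1 else 0))"
    unfolding wsum_def by (simp add: prod.distrib)
  also have "\<dots> = (\<Prod>i\<in>\<nu>. \<Sum>v\<in>V i. w i v * (if v \<le> t then 1 else 0))"
    using assms by (simp add: prod_sum_PiE)
  also have "\<dots> = (\<Prod>i\<in>\<nu>. \<Sum>v\<in>{v\<in>V i. v \<le> t}. w i v)"
    using assms by (intro prod.cong refl) (simp add: sum.inter_filter[symmetric] if_distrib cong: if_cong)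
  also have "\<dots> = (\<Prod>i\<in>\<nu>. t * c i)"
    using assms by (intro prod.cong refl) (simp add: mult_ac)
  also have "\<dots> = t ^ card \<nu> * (\<Prod>i\<in>\<nu>. c i)"
    by (simp add: prod.distrib)
  finally show ?thesis .
qed

lemma nsum_formula:
  fixes U :: "nat set" and V :: "nat \<Rightarrow> real set" and w :: "nat \<Rightarrow> real \<Rightarrow> real"
  assumes finU: "finite U" and nn: "\<And>i. i \<in> U \<Longrightarrow> \<theta> i \<ge> 0"
    and finV: "\<And>i. i \<in> U \<Longrightarrow> finite (V i)"
    and tot: "\<And>i. i \<in> U \<Longrightarrow> (\<Sum>v\<in>V i. w i v) = 1"
    and cdf: "\<And>i \<mu>. i \<in> U \<Longrightarrow> \<mu> \<subseteq> U \<Longrightarrow> i \<in> \<mu> \<Longrightarrow>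
        (\<Sum>v\<in>{v\<in>V i. v \<le> theta_sum \<theta> \<mu>}. w i v) = c i * theta_sum \<theta> \<mu>"
  shows "card B = n \<Longrightarrow> B \<inter> \<kappa> = {} \<Longrightarrow> B \<union> \<kappa> \<subseteq> U \<Longrightarrow>
    wsum B V w (\<lambda>l. if Nset \<theta> B (theta_sum \<theta> \<kappa>) l then 1 else 0) = fpol \<theta> c B (theta_sum \<theta> \<kappa>) 1"
proof (induction n arbitrary: B \<kappa> rule: less_induct)
  case (less n B \<kappa>)
  let ?a = "theta_sum \<theta> \<kappa>"
  let ?N = "\<lambda>B a. (\<lambda>l. if Nset \<theta> B a l then 1 else 0::real)"
  have finB: "finite B" and finK: "finite \<kappa>" using less.prems finU by (auto intro: finite_subset)
  have nnB: "\<And>i. i \<in> B \<Longrightarrow> \<theta> i \<ge> 0" using less.prems nn by auto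
  have finVB: "\<And>i. i \<in> B \<Longrightarrow> finite (V i)" using less.prems finV by auto
  have one: "wsum B V w (\<lambda>l. 1) = 1"
    using finB finVB tot less.prems by (intro wsum_one) auto
  have part: "wsum B V w (\<lambda>l. 1) = (\<Sum>\<nu>\<in>Pow B. wsum B V w (\<lambda>l. if Mx \<theta> B ?a l = \<nu> then 1 else 0))"
  proof -
    have "(\<Sum>\<nu>\<in>Pow B. wsum B V w (\<lambda>l. if Mx \<theta> B ?a l = \<nu> then 1 else 0))
       = (\<Sum>l\<in>PiE B V. \<Sum>\<nu>\<in>Pow B. (\<Prod>i\<in>B. w i (l i)) * (if Mx \<theta> B ?a l = \<nu> then 1 else 0))"
      unfolding wsum_def by (rule sum.swap)
    also have "\<dots> = (\<Sum>l\<in>PiE B V. (\<Prod>i\<in>B. w i (l i)) * 1)"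
    proof (rule sum.cong[OF refl])
      fix l
      have "Mx \<theta> B ?a l \<in> Pow B" using Mx_sub by auto
      then show "(\<Sum>\<nu>\<in>Pow B. (\<Prod>i\<in>B. w i (l i)) * (if Mx \<theta> B ?a l = \<nu> then 1 else 0)) = (\<Prod>i\<in>B. w i (l i)) * 1"
        using finB by (simp add: sum_distrib_left[symmetric] sum.delta)
    qed
    finally show ?thesis unfolding wsum_def by simp
  qed
  have trm: "wsum B V w (\<lambda>l. if Mx \<theta> B ?a l = \<nu> then 1 else 0)
      = (theta_sum \<theta> (\<kappa> \<union> \<nu>)) ^ card \<nu> * (\<Prod>i\<in>\<nu>. c i) * wsum (B - \<nu>) V w (?N (B - \<nu>) (theta_sum \<theta> (\<kappa> \<union> \<nu>)))"
    if nuB: "\<nu> \<in> Pow B" for \<nu>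
  proof -
    have nsub: "\<nu> \<subseteq> B" using nuB by auto
    have finnu: "finite \<nu>" using finB nsub by (rule rev_finite_subset)
    have dj: "\<kappa> \<inter> \<nu> = {}" using less.prems nsub by auto
    have tu: "?a + theta_sum \<theta> \<nu> = theta_sum \<theta> (\<kappa> \<union> \<nu>)"
      using theta_union[OF finK finnu dj, of \<theta>] by simp
    let ?t = "theta_sum \<theta> (\<kappa> \<union> \<nu>)"
    have ind: "(if Mx \<theta> B ?a l = \<nu> then 1 else 0::real)
        = (\<Prod>i\<in>\<nu>. (if l i \<le> ?t then 1 else 0)) * ?N (B - \<nu>) ?t l" for l
    proof -
      have "(if Mx \<theta> B ?a l = \<nu> then 1 else 0::real)
          = (if goodset \<theta> ?a \<nu> l then 1 else 0) * ?N (B - \<nu>) (?a + theta_sum \<theta> \<nu>) l"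
        using Mx_iff[OF finB nnB nsub, where a="?a" and l=l] by simp
      also have "(if goodset \<theta> ?a \<nu> l then 1 else 0::real) = (\<Prod>i\<in>\<nu>. (if l i \<le> ?a + theta_sum \<theta> \<nu> then 1 else 0))"
        using finnu by (rule goodset_prod)
      finally show ?thesis unfolding tu .
    qed
    have "wsum B V w (\<lambda>l. if Mx \<theta> B ?a l = \<nu> then 1 else 0)
        = wsum B V w (\<lambda>l. (\<Prod>i\<in>\<nu>. (if l i \<le> ?t then 1 else 0)) * ?N (B - \<nu>) ?t l)"
      unfolding ind ..
    also have "\<dots> = wsum \<nu> V w (\<lambda>l. \<Prod>i\<in>\<nu>. (if l i \<le> ?t then 1 else 0)) * wsum (B - \<nu>) V w (?N (B - \<nu>) ?t)"
    proof (rule sum_PiE_split[OF finB nsub finVB])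
      fix l l' :: "nat \<Rightarrow> real" assume "\<And>i. i \<in> \<nu> \<Longrightarrow> l i = l' i"
      then show "(\<Prod>i\<in>\<nu>. (if l i \<le> ?t then 1 else 0::real)) = (\<Prod>i\<in>\<nu>. (if l' i \<le> ?t then 1 else 0))"
        by (intro prod.cong) auto
    next
      fix l l' :: "nat \<Rightarrow> real" assume "\<And>i. i \<in> B - \<nu> \<Longrightarrow> l i = l' i"
      then show "?N (B - \<nu>) ?t l = ?N (B - \<nu>) ?t l'"
        using Nset_cong[of "B - \<nu>" l l' \<theta> ?t] by simp
    qed
    also have "wsum \<nu> V w (\<lambda>l. \<Prod>i\<in>\<nu>. (if l i \<le> ?t then 1 else 0)) = ?t ^ card \<nu> * (\<Prod>i\<in>\<nu>. c i)"
    proof (rule wsum_cdf[OF finnu])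
      fix i assume i: "i \<in> \<nu>"
      then show "finite (V i)" using finVB nsub by auto
      show "(\<Sum>v\<in>{v\<in>V i. v \<le> ?t}. w i v) = c i * ?t"
        using i nsub less.prems by (intro cdf) auto
    qed
    finally show ?thesis .
  qed
  have hur1: "hur \<theta> c B ?a 1 = 1" using hur_identity[OF finB] by simp
  have A: "(\<Sum>\<nu>\<in>Pow B. wsum B V w (\<lambda>l. if Mx \<theta> B ?a l = \<nu> then 1 else 0)) = 1"
    using one part by simp
  have Bh: "(\<Sum>\<nu>\<in>Pow B. (?a + theta_sum \<theta> \<nu>) ^ card \<nu> * (\<Prod>i\<in>\<nu>. c i) * fpol \<theta> c (B - \<nu>) (?a + theta_sum \<theta> \<nu>) 1) = 1"
    using hur1 unfolding hur_def .
  have T0: "wsum B V w (\<lambda>l. if Mx \<theta> B ?a l = {} then 1 else 0) = wsum B V w (?N B ?a)"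
    using trm[of "{}"] by simp
  have H0: "(?a + theta_sum \<theta> {}) ^ card {} * (\<Prod>i\<in>{}. c i) * fpol \<theta> c (B - {}) (?a + theta_sum \<theta> {}) 1 = fpol \<theta> c B ?a 1"
    by (simp add: theta_sum_def)
  have rm: "\<And>f :: nat set \<Rightarrow> real. (\<Sum>\<nu>\<in>Pow B. f \<nu>) = f {} + (\<Sum>\<nu>\<in>Pow B - {{}}. f \<nu>)"
    using finB by (intro sum.remove) auto
  note A' = A[unfolded rm[of "\<lambda>\<nu>. wsum B V w (\<lambda>l. if Mx \<theta> B ?a l = \<nu> then 1 else 0)"] T0]
  note Bh' = Bh[unfolded rm[of "\<lambda>\<nu>. (?a + theta_sum \<theta> \<nu>) ^ card \<nu> * (\<Prod>i\<in>\<nu>. c i) * fpol \<theta> c (B - \<nu>) (?a + theta_sum \<theta> \<nu>) 1"] H0]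
  have S: "(\<Sum>\<nu>\<in>Pow B - {{}}. wsum B V w (\<lambda>l. if Mx \<theta> B ?a l = \<nu> then 1 else 0))
      = (\<Sum>\<nu>\<in>Pow B - {{}}. (?a + theta_sum \<theta> \<nu>) ^ card \<nu> * (\<Prod>i\<in>\<nu>. c i) * fpol \<theta> c (B - \<nu>) (?a + theta_sum \<theta> \<nu>) 1)"
  proof (rule sum.cong[OF refl])
    fix \<nu> assume nu: "\<nu> \<in> Pow B - {{}}"
    then have nsub: "\<nu> \<subseteq> B" and nne: "\<nu> \<noteq> {}" by auto
    have finnu: "finite \<nu>" using finB nsub by (rule rev_finite_subset)
    have dj: "\<kappa> \<inter> \<nu> = {}" using less.prems nsub by auto
    have tu: "?a + theta_sum \<theta> \<nu> = theta_sum \<theta> (\<kappa> \<union> \<nu>)"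
      using theta_union[OF finK finnu dj, of \<theta>] by simp
    have lt: "card (B - \<nu>) < n"
    proof -
      have "card (B - \<nu>) = card B - card \<nu>" by (rule card_Diff_subset[OF finnu nsub])
      moreover have "card \<nu> > 0" using finnu nne by (simp add: card_gt_0_iff)
      moreover have "card \<nu> \<le> card B" using finB nsub by (rule card_mono)
      ultimately show ?thesis using less.prems by simp
    qed
    have IH: "wsum (B - \<nu>) V w (?N (B - \<nu>) (theta_sum \<theta> (\<kappa> \<union> \<nu>))) = fpol \<theta> c (B - \<nu>) (theta_sum \<theta> (\<kappa> \<union> \<nu>)) 1"
      by (rule less.IH[OF lt refl]) (use less.prems nsub in auto)
    show "wsum B V w (\<lambda>l. if Mx \<theta> B ?a l = \<nu> then 1 else 0)
      = (?a + theta_sum \<theta> \<nu>) ^ card \<nu> * (\<Prod>i\<in>\<nu>. c i) * fpol \<theta> c (B - \<nu>) (?a + theta_sum \<theta> \<nu>) 1"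
      using trm[of \<nu>] nsub IH tu by simp
  qed
  show ?case using A' Bh' S by linarith
qed



lemma coord_lemma:
  fixes w w' h :: "real \<Rightarrow> real"
  shows "finite V \<Longrightarrow> card V = n \<Longrightarrow> (\<And>u v. u \<in> V \<Longrightarrow> v \<in> V \<Longrightarrow> u \<le> v \<Longrightarrow> h v \<le> h u) \<Longrightarrow>
    (\<Sum>v\<in>V. w v) = (\<Sum>v\<in>V. w' v) \<Longrightarrow>
    (\<And>t. t \<in> V \<Longrightarrow> (\<Sum>v\<in>{v\<in>V. v \<le> t}. w' v) \<le> (\<Sum>v\<in>{v\<in>V. v \<le> t}. w v)) \<Longrightarrow>
    (\<Sum>v\<in>V. w' v * h v) \<le> (\<Sum>v\<in>V. w v * h v)"
proof (induction n arbitrary: V w w')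
  case 0
  then show ?case by simp
next
  case (Suc n)
  note fin = Suc.prems(1)
  have ne: "V \<noteq> {}" using Suc.prems by auto
  define m where "m = Max V"
  have mV: "m \<in> V" unfolding m_def using fin ne by simp
  have mmax: "\<And>v. v \<in> V \<Longrightarrow> v \<le> m" unfolding m_def using fin by simp
  let ?V' = "V - {m}"
  have finV': "finite ?V'" using fin by simp
  have sumV: "\<And>f. (\<Sum>v\<in>V. f v) = f m + (\<Sum>v\<in>?V'. f v)"
    using fin mV by (intro sum.remove)
  show ?case
  proof (cases "?V' = {}")
    case True
    then have "V = {m}" using mV by auto
    then show ?thesis using Suc.prems(4) by simp
  next
    case False
    define m' where "m' = Max ?V'"
    have m'V: "m' \<in> ?V'" unfolding m'_def using finV' False by (rule Max_in)
    have m'max: "\<And>v. v \<in> ?V' \<Longrightarrow> v \<le> m'" unfolding m'_def using finV' by simp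
    have m'm: "m' < m" using m'V mmax by force
    define wt where "wt = (\<lambda>v. w v + (if v = m' then w m else 0))"
    define wt' where "wt' = (\<lambda>v. w' v + (if v = m' then w' m else 0))"
    have s_wt: "\<And>f. (\<Sum>v\<in>?V'. (ww v + (if v = m' then ww m else 0)) * f v) = (\<Sum>v\<in>?V'. ww v * f v) + ww m * f m'" for ww :: "real \<Rightarrow> real"
    proof -
      fix f :: "real \<Rightarrow> real"
      have e: "\<And>v. (ww v + (if v = m' then ww m else 0)) * f v = ww v * f v + (if m' = v then ww m * f m' else 0)"
        by (auto simp: distrib_right)
      show "(\<Sum>v\<in>?V'. (ww v + (if v = m' then ww m else 0)) * f v) = (\<Sum>v\<in>?V'. ww v * f v) + ww m * f m'"
        unfolding e sum.distrib using finV' m'V by (simp add: sum.delta)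
    qed
    have t_wt: "(\<Sum>v\<in>?V'. (ww v + (if v = m' then ww m else 0))) = (\<Sum>v\<in>?V'. ww v) + ww m" for ww :: "real \<Rightarrow> real"
      using s_wt[of ww "\<lambda>_. 1"] by simp
    have c_wt: "(\<Sum>v\<in>{v\<in>?V'. v \<le> t}. (ww v + (if v = m' then ww m else 0))) = (\<Sum>v\<in>{v\<in>?V'. v \<le> t}. ww v) + (if m' \<le> t then ww m else 0)"
      for ww :: "real \<Rightarrow> real" and t
      using finV' m'V by (simp add: sum.distrib sum.delta)
    have cardV': "card ?V' = n" using Suc.prems mV by simp
    have IH: "(\<Sum>v\<in>?V'. wt' v * h v) \<le> (\<Sum>v\<in>?V'. wt v * h v)"
    proof (rule Suc.IH[OF finV' cardV'])
      show "\<And>u v. u \<in> ?V' \<Longrightarrow> v \<in> ?V' \<Longrightarrow> u \<le> v \<Longrightarrow> h v \<le> h u" using Suc.prems(3) by auto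
      show "(\<Sum>v\<in>?V'. wt v) = (\<Sum>v\<in>?V'. wt' v)"
        unfolding wt_def wt'_def t_wt using Suc.prems(4) sumV[of w] sumV[of w'] by (simp add: add_ac)
    next
      fix t assume t: "t \<in> ?V'"
      have tm: "t \<le> m'" using m'max t by simp
      show "(\<Sum>v\<in>{v\<in>?V'. v \<le> t}. wt' v) \<le> (\<Sum>v\<in>{v\<in>?V'. v \<le> t}. wt v)"
      proof (cases "t = m'")
        case True
        have e: "{v\<in>?V'. v \<le> t} = ?V'" using m'max True by auto
        show ?thesis
          unfolding e wt_def wt'_def t_wt using Suc.prems(4) sumV[of w] sumV[of w'] by (simp add: add_ac)
      next
        case False
        then have "\<not> m' \<le> t" using tm by simp
        moreover have "{v\<in>?V'. v \<le> t} = {v\<in>V. v \<le> t}" using t m'm tm by auto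
        ultimately show ?thesis
          unfolding wt_def wt'_def c_wt using Suc.prems(5) t by simp
      qed
    qed
    have d: "(\<Sum>v\<in>V. ww v * h v) = (\<Sum>v\<in>?V'. (ww v + (if v = m' then ww m else 0)) * h v) + ww m * (h m - h m')"
      for ww :: "real \<Rightarrow> real"
      unfolding s_wt sumV by (simp add: algebra_simps)
    have hmm: "h m \<le> h m'" using Suc.prems(3) mV m'V m'm by auto
    have le_m: "{v\<in>V. v \<le> m'} = ?V'" using m'max mmax m'm by fastforce
    have wm: "w m \<le> w' m"
    proof -
      have "(\<Sum>v\<in>{v\<in>V. v \<le> m'}. w' v) \<le> (\<Sum>v\<in>{v\<in>V. v \<le> m'}. w v)"
        using Suc.prems(5) m'V by auto
      then show ?thesis unfolding le_m using Suc.prems(4) sumV[of w] sumV[of w'] by simp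
    qed
    have "w' m * (h m - h m') \<le> w m * (h m - h m')"
      using wm hmm by (intro mult_right_mono_neg) auto
    then show ?thesis
      unfolding d[of w] d[of w'] using IH unfolding wt_def wt'_def by simp
  qed
qed

lemma wsum_insert:
  assumes fin: "finite A" and j: "j \<notin> A"
  shows "wsum (insert j A) V w g = (\<Sum>v\<in>V j. w j v * wsum A V w (\<lambda>l. g (l(j := v))))"
proof -
  have "(\<Sum>v\<in>V j. w j v * wsum A V w (\<lambda>l. g (l(j := v))))
      = (\<Sum>(v, l)\<in>V j \<times> PiE A V. w j v * ((\<Prod>i\<in>A. w i (l i)) * g (l(j := v))))"
    unfolding wsum_def by (simp add: sum_distrib_left sum.cartesian_product)
  also have "\<dots> = (\<Sum>l\<in>PiE (insert j A) V. (\<Prod>i\<in>insert j A. w i (l i)) * g l)"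
  proof (rule sum.reindex_bij_witness[of _ "\<lambda>l. (l j, l(j := undefined))" "\<lambda>(v, l). l(j := v)"])
    fix l assume l: "l \<in> PiE (insert j A) V"
    show "(case (l j, l(j := undefined)) of (v, l) \<Rightarrow> l(j := v)) = l" by simp
    show "(l j, l(j := undefined)) \<in> V j \<times> PiE A V"
      using l j by (auto simp: PiE_def extensional_def Pi_def)
  next
    fix vl assume vl: "vl \<in> V j \<times> PiE A V"
    obtain v l where vld: "vl = (v, l)" by force
    with vl have v: "v \<in> V j" and l: "l \<in> PiE A V" by auto
    have lj: "l j = undefined" using l j by (auto simp: PiE_def extensional_def)
    show "((case vl of (v, l) \<Rightarrow> l(j := v)) j, (case vl of (v, l) \<Rightarrow> l(j := v))(j := undefined)) = vl"
      unfolding vld using lj by (auto simp: fun_eq_iff)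
    show "(case vl of (v, l) \<Rightarrow> l(j := v)) \<in> PiE (insert j A) V"
      unfolding vld using v l by (auto simp: PiE_def extensional_def Pi_def)
    have "(\<Prod>i\<in>insert j A. w i ((l(j := v)) i)) = w j v * (\<Prod>i\<in>A. w i (l i))"
    proof -
      have "(\<Prod>i\<in>A. w i ((l(j := v)) i)) = (\<Prod>i\<in>A. w i (l i))" using j by (intro prod.cong) auto
      then show ?thesis using fin j by simp
    qed
    then show "(\<Prod>i\<in>insert j A. w i ((case vl of (v, l) \<Rightarrow> l(j := v)) i)) * g (case vl of (v, l) \<Rightarrow> l(j := v))
        = (case vl of (v, l) \<Rightarrow> w j v * ((\<Prod>i\<in>A. w i (l i)) * g (l(j := v))))"
      unfolding vld by simp
  qed
  finally show ?thesis unfolding wsum_def by simp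
qed

lemma replace_lemma:
  fixes w w' :: "nat \<Rightarrow> real \<Rightarrow> real"
  assumes "finite A"
  shows "(\<And>i. i \<in> A \<Longrightarrow> finite (V i)) \<Longrightarrow>
    (\<And>i v. i \<in> A \<Longrightarrow> v \<in> V i \<Longrightarrow> w i v \<ge> 0) \<Longrightarrow>
    (\<And>i v. i \<in> A \<Longrightarrow> v \<in> V i \<Longrightarrow> w' i v \<ge> 0) \<Longrightarrow>
    (\<And>i. i \<in> A \<Longrightarrow> (\<Sum>v\<in>V i. w i v) = (\<Sum>v\<in>V i. w' i v)) \<Longrightarrow>
    (\<And>i t. i \<in> A \<Longrightarrow> t \<in> V i \<Longrightarrow> (\<Sum>v\<in>{v\<in>V i. v \<le> t}. w' i v) \<le> (\<Sum>v\<in>{v\<in>V i. v \<le> t}. w i v)) \<Longrightarrow>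
    (\<And>l l'. (\<And>i. i \<in> A \<Longrightarrow> l i \<le> l' i) \<Longrightarrow> g l' \<le> g l) \<Longrightarrow>
    wsum A V w' g \<le> wsum A V w g"
  using assms
proof (induction A arbitrary: g rule: finite_induct)
  case empty
  then show ?case by (simp add: wsum_def)
next
  case (insert j A)
  let ?gv = "\<lambda>v. (\<lambda>l. g (l(j := v)))"
  let ?h = "\<lambda>v. wsum A V w' (?gv v)"
  have "wsum (insert j A) V w' g = (\<Sum>v\<in>V j. w' j v * ?h v)"
    using insert.hyps by (rule wsum_insert)
  also have "\<dots> \<le> (\<Sum>v\<in>V j. w j v * ?h v)"
  proof (rule coord_lemma[OF _ refl])
    show "finite (V j)" using insert.prems by auto
    show "(\<Sum>v\<in>V j. w j v) = (\<Sum>v\<in>V j. w' j v)" using insert.prems by auto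
    show "\<And>t. t \<in> V j \<Longrightarrow> (\<Sum>v\<in>{v\<in>V j. v \<le> t}. w' j v) \<le> (\<Sum>v\<in>{v\<in>V j. v \<le> t}. w j v)"
      using insert.prems by auto
  next
    fix u v :: real assume uv: "u \<le> v"
    show "?h v \<le> ?h u"
      unfolding wsum_def
    proof (rule sum_mono)
      fix l assume l: "l \<in> PiE A V"
      have lV: "\<And>i. i \<in> A \<Longrightarrow> l i \<in> V i" using l by (auto simp: PiE_iff)
      have "(\<Prod>i\<in>A. w' i (l i)) \<ge> 0" using lV insert.prems(3) by (intro prod_nonneg) auto
      moreover have "g (l(j := v)) \<le> g (l(j := u))" using uv by (intro insert.prems(6)) auto
      ultimately show "(\<Prod>i\<in>A. w' i (l i)) * g (l(j := v)) \<le> (\<Prod>i\<in>A. w' i (l i)) * g (l(j := u))"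
        by (simp add: mult_left_mono)
    qed
  qed
  also have "\<dots> \<le> (\<Sum>v\<in>V j. w j v * wsum A V w (?gv v))"
  proof (rule sum_mono)
    fix v assume v: "v \<in> V j"
    have "?h v \<le> wsum A V w (?gv v)"
    proof (rule insert.IH)
      fix l l' :: "nat \<Rightarrow> real" assume "\<And>i. i \<in> A \<Longrightarrow> l i \<le> l' i"
      then show "g (l'(j := v)) \<le> g (l(j := v))" by (intro insert.prems(6)) auto
    qed (use insert.prems insert.hyps in auto)
    then show "w j v * ?h v \<le> w j v * wsum A V w (?gv v)"
      using insert.prems v by (intro mult_left_mono) auto
  qed
  also have "\<dots> = wsum (insert j A) V w g"
    using insert.hyps by (rule wsum_insert[symmetric])
  finally show ?case .
qed



definition prevT :: "real set \<Rightarrow> real \<Rightarrow> real" where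
  "prevT T v = Max (insert 0 {s\<in>T. s < v})"

lemma telescope_aux:
  "finite T \<Longrightarrow> card T = n \<Longrightarrow> T \<noteq> {} \<Longrightarrow> (\<forall>s\<in>T. s > 0) \<Longrightarrow> (\<Sum>v\<in>T. v - prevT T v) = Max T"
proof (induction n arbitrary: T)
  case 0
  then show ?case by simp
next
  case (Suc n)
  define m where "m = Max T"
  have mT: "m \<in> T" unfolding m_def using Suc.prems by simp
  have mmax: "\<And>v. v \<in> T \<Longrightarrow> v \<le> m" unfolding m_def using Suc.prems by simp
  let ?T' = "T - {m}"
  have fin': "finite ?T'" using Suc.prems by simp
  have pv: "prevT T v = prevT ?T' v" if "v \<in> ?T'" for v
  proof -
    have "{s\<in>T. s < v} = {s\<in>?T'. s < v}" using that mmax by force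
    then show ?thesis unfolding prevT_def by simp
  qed
  have "(\<Sum>v\<in>T. v - prevT T v) = (m - prevT T m) + (\<Sum>v\<in>?T'. v - prevT T v)"
    using Suc.prems mT by (intro sum.remove)
  also have "(\<Sum>v\<in>?T'. v - prevT T v) = (\<Sum>v\<in>?T'. v - prevT ?T' v)"
    using pv by (intro sum.cong) auto
  finally have eq: "(\<Sum>v\<in>T. v - prevT T v) = (m - prevT T m) + (\<Sum>v\<in>?T'. v - prevT ?T' v)" .
  show ?case
  proof (cases "?T' = {}")
    case True
    then have "{s\<in>T. s < m} = {}" by auto
    then have "prevT T m = 0" unfolding prevT_def by (simp only:) simp
    then show ?thesis using eq True m_def by (simp only: True sum.empty)
  next
    case False
    have s: "{s\<in>T. s < m} = ?T'" using mmax by force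
    have "prevT T m = Max ?T'"
      unfolding prevT_def s using False fin' Suc.prems(4)
      by (metis (no_types, lifting) DiffD1 Max_in Max_insert less_eq_real_def max_def)
    moreover have "(\<Sum>v\<in>?T'. v - prevT ?T' v) = Max ?T'"
      using Suc.prems mT False by (intro Suc.IH) auto
    ultimately show ?thesis using eq m_def by simp
  qed
qed

lemma telescope:
  assumes "finite T" "T \<noteq> {}" "\<forall>s\<in>T. s > 0"
  shows "(\<Sum>v\<in>T. v - prevT T v) = Max T"
  using telescope_aux assms by blast

lemma telescope_upto:
  assumes fin: "finite T" and pos: "\<forall>s\<in>T. s > 0" and t: "t \<in> T"
  shows "(\<Sum>v\<in>{v\<in>T. v \<le> t}. v - prevT T v) = t"
proof -
  let ?Tt = "{v\<in>T. v \<le> t}"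
  have "prevT T v = prevT ?Tt v" if "v \<in> ?Tt" for v
  proof -
    have "{s\<in>T. s < v} = {s\<in>?Tt. s < v}" using that by force
    then show ?thesis unfolding prevT_def by simp
  qed
  then have "(\<Sum>v\<in>?Tt. v - prevT T v) = (\<Sum>v\<in>?Tt. v - prevT ?Tt v)" by (intro sum.cong) auto
  also have "\<dots> = Max ?Tt" using fin pos t by (intro telescope) auto
  also have "Max ?Tt = t" using fin t by (intro Max_eqI) auto
  finally show ?thesis .
qed

lemma prevT_le:
  assumes "finite T" "v > 0"
  shows "prevT T v \<le> v"
  unfolding prevT_def using assms by (intro Max.boundedI) auto



definition Tg :: "nat set \<Rightarrow> (nat \<Rightarrow> real) \<Rightarrow> nat \<Rightarrow> real set" where
  "Tg U \<theta> i = theta_sum \<theta> ` {\<mu>. \<mu> \<subseteq> U \<and> i \<in> \<mu>}"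

definition Vg :: "nat set \<Rightarrow> (nat \<Rightarrow> real) \<Rightarrow> nat \<Rightarrow> real set" where
  "Vg U \<theta> i = insert 2 (Tg U \<theta> i)"

lemma Tg_props:
  assumes finU: "finite U" and pos: "\<And>i. i \<in> U \<Longrightarrow> \<theta> i > 0" and tot: "theta_sum \<theta> U = 1"
    and i: "i \<in> U"
  shows "finite (Tg U \<theta> i)" "\<And>t. t \<in> Tg U \<theta> i \<Longrightarrow> 0 < t \<and> t \<le> 1" "1 \<in> Tg U \<theta> i"
proof -
  show "finite (Tg U \<theta> i)" unfolding Tg_def using finU by auto
  show "1 \<in> Tg U \<theta> i" unfolding Tg_def using tot i by (intro image_eqI[of _ _ U]) auto
  fix t assume "t \<in> Tg U \<theta> i"
  then obtain \<mu> where mu: "\<mu> \<subseteq> U" "i \<in> \<mu>" "t = theta_sum \<theta> \<mu>" unfolding Tg_def by auto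
  have fmu: "finite \<mu>" using finU mu by (auto intro: finite_subset)
  have "0 < \<theta> i" using pos i by auto
  also have "\<theta> i \<le> theta_sum \<theta> \<mu>" unfolding theta_sum_def
    using fmu mu pos by (intro member_le_sum) (auto intro: less_imp_le)
  finally have "0 < t" using mu by simp
  moreover have "t \<le> 1"
    using theta_mono[OF finU mu(1) subset_refl, of \<theta>] pos tot mu by (auto intro: less_imp_le)
  ultimately show "0 < t \<and> t \<le> 1" by simp
qed

lemma wsum_diff:
  "wsum A V w (\<lambda>l. f l - g l) = wsum A V w f - wsum A V w g"
  unfolding wsum_def by (simp add: algebra_simps sum_subtractf)


lemma finite_main:
  fixes w :: "nat \<Rightarrow> real \<Rightarrow> real" and c :: "nat \<Rightarrow> real"
  assumes finU: "finite U" and pos: "\<And>i. i \<in> U \<Longrightarrow> \<theta> i > 0" and tot: "theta_sum \<theta> U = 1"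
    and c01: "\<And>i. i \<in> U \<Longrightarrow> 0 \<le> c i \<and> c i \<le> 1"
    and wnn: "\<And>i v. i \<in> U \<Longrightarrow> v \<in> Vg U \<theta> i \<Longrightarrow> w i v \<ge> 0"
    and wtot: "\<And>i. i \<in> U \<Longrightarrow> (\<Sum>v\<in>Vg U \<theta> i. w i v) = 1"
    and wcdf: "\<And>i t. i \<in> U \<Longrightarrow> t \<in> Tg U \<theta> i \<Longrightarrow> c i * t \<le> (\<Sum>v\<in>{v\<in>Vg U \<theta> i. v \<le> t}. w i v)"
  shows "(\<Sum>i\<in>U. \<theta> i * c i) \<le> wsum U (Vg U \<theta>) w (\<lambda>l. if Nset \<theta> U 0 l then 0 else 1)"
proof -
  let ?T = "Tg U \<theta>" and ?V = "Vg U \<theta>"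
  define ws where "ws = (\<lambda>i v. if v = 2 then 1 - c i else c i * (v - prevT (?T i) v))"
  have Tf: "\<And>i. i \<in> U \<Longrightarrow> finite (?T i)" using Tg_props[OF finU pos tot] by blast
  have Tr: "\<And>i t. i \<in> U \<Longrightarrow> t \<in> ?T i \<Longrightarrow> 0 < t \<and> t \<le> 1" using Tg_props[OF finU pos tot] by blast
  have T1: "\<And>i. i \<in> U \<Longrightarrow> 1 \<in> ?T i" using Tg_props[OF finU pos tot] by blast
  have Vf: "\<And>i. i \<in> U \<Longrightarrow> finite (?V i)" using Tf unfolding Vg_def by simp
  have two: "\<And>i. i \<in> U \<Longrightarrow> 2 \<notin> ?T i" using Tr by force
  have ws_nn: "\<And>i v. i \<in> U \<Longrightarrow> v \<in> ?V i \<Longrightarrow> ws i v \<ge> 0"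
  proof -
    fix i v assume i: "i \<in> U" and v: "v \<in> ?V i"
    show "ws i v \<ge> 0"
    proof (cases "v = 2")
      case True then show ?thesis unfolding ws_def using c01 i by simp
    next
      case False
      then have "v \<in> ?T i" using v unfolding Vg_def by auto
      then have "prevT (?T i) v \<le> v" using Tf Tr i by (intro prevT_le) auto
      then show ?thesis unfolding ws_def using c01 i False by simp
    qed
  qed
  have ws_cdf: "(\<Sum>v\<in>{v\<in>?V i. v \<le> t}. ws i v) = c i * t" if i: "i \<in> U" and t: "t \<in> ?T i" for i t
  proof -
    have t1: "t \<le> 1" using Tr[OF i t] by simp
    have seq: "{v\<in>?V i. v \<le> t} = {v\<in>?T i. v \<le> t}"
    proof
      show "{v\<in>?V i. v \<le> t} \<subseteq> {v\<in>?T i. v \<le> t}" using t1 unfolding Vg_def by auto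
      show "{v\<in>?T i. v \<le> t} \<subseteq> {v\<in>?V i. v \<le> t}" unfolding Vg_def by blast
    qed
    have "(\<Sum>v\<in>{v\<in>?T i. v \<le> t}. ws i v) = (\<Sum>v\<in>{v\<in>?T i. v \<le> t}. c i * (v - prevT (?T i) v))"
    proof (rule sum.cong[OF refl])
      fix v assume "v \<in> {v\<in>?T i. v \<le> t}"
      then have "v \<noteq> 2" using t1 by auto
      then show "ws i v = c i * (v - prevT (?T i) v)" unfolding ws_def by simp
    qed
    also have "\<dots> = c i * (\<Sum>v\<in>{v\<in>?T i. v \<le> t}. v - prevT (?T i) v)" by (simp only: sum_distrib_left)
    also have "(\<Sum>v\<in>{v\<in>?T i. v \<le> t}. v - prevT (?T i) v) = t"
      using Tf[OF i] Tr[OF i] t by (intro telescope_upto) auto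
    finally show ?thesis unfolding seq by simp
  qed
  have ws_tot: "(\<Sum>v\<in>?V i. ws i v) = 1" if i: "i \<in> U" for i
  proof -
    have "(\<Sum>v\<in>?V i. ws i v) = ws i 2 + (\<Sum>v\<in>?T i. ws i v)"
      unfolding Vg_def using Tf[OF i] two[OF i] by (rule sum.insert)
    moreover have seq: "{v\<in>?V i. v \<le> 1} = ?T i"
    proof
      show "{v\<in>?V i. v \<le> 1} \<subseteq> ?T i" unfolding Vg_def by auto
      show "?T i \<subseteq> {v\<in>?V i. v \<le> 1}" using Tr[OF i] unfolding Vg_def by blast
    qed
    moreover have "(\<Sum>v\<in>{v\<in>?V i. v \<le> 1}. ws i v) = c i" using ws_cdf[OF i T1[OF i]] by simp
    moreover have "ws i 2 = 1 - c i" unfolding ws_def by simp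
    ultimately show ?thesis by simp
  qed
  have repl: "wsum U ?V ws (\<lambda>l. if Nset \<theta> U 0 l then 0 else 1) \<le> wsum U ?V w (\<lambda>l. if Nset \<theta> U 0 l then 0 else 1)"
  proof (rule replace_lemma[OF finU])
    show "\<And>i. i \<in> U \<Longrightarrow> finite (?V i)" by (rule Vf)
    show "\<And>i v. i \<in> U \<Longrightarrow> v \<in> ?V i \<Longrightarrow> 0 \<le> w i v" by (rule wnn)
    show "\<And>i v. i \<in> U \<Longrightarrow> v \<in> ?V i \<Longrightarrow> 0 \<le> ws i v" by (rule ws_nn)
    show "\<And>i. i \<in> U \<Longrightarrow> (\<Sum>v\<in>?V i. w i v) = (\<Sum>v\<in>?V i. ws i v)" using wtot ws_tot by simp
  next
    fix i t assume i: "i \<in> U" and t: "t \<in> ?V i"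
    show "(\<Sum>v\<in>{v\<in>?V i. v \<le> t}. ws i v) \<le> (\<Sum>v\<in>{v\<in>?V i. v \<le> t}. w i v)"
    proof (cases "t = 2")
      case True
      have "{v\<in>?V i. v \<le> t} = ?V i"
      proof
        show "?V i \<subseteq> {v\<in>?V i. v \<le> t}"
        proof
          fix v assume v: "v \<in> ?V i"
          have "v \<le> 2"
          proof (cases "v = 2")
            case False then have "v \<in> ?T i" using v unfolding Vg_def by auto
            then show ?thesis using Tr[OF i] by force
          qed simp
          then show "v \<in> {v\<in>?V i. v \<le> t}" using v True by simp
        qed
      qed auto
      then show ?thesis using wtot[OF i] ws_tot[OF i] by simp
    next
      case False
      then have "t \<in> ?T i" using t unfolding Vg_def by auto
      then show ?thesis using ws_cdf[OF i] wcdf[OF i] by simp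
    qed
  next
    fix l l' :: "nat \<Rightarrow> real" assume le: "\<And>i. i \<in> U \<Longrightarrow> l i \<le> l' i"
    show "(if Nset \<theta> U 0 l' then 0 else 1) \<le> (if Nset \<theta> U 0 l then 0 else 1::real)"
    proof (cases "Nset \<theta> U 0 l'")
      case False
      then obtain \<nu> where nu: "\<nu> \<subseteq> U" "\<nu> \<noteq> {}" "goodset \<theta> 0 \<nu> l'" unfolding Nset_def by auto
      have "goodset \<theta> 0 \<nu> l" unfolding goodset_def
      proof
        fix i assume i: "i \<in> \<nu>"
        then have "l i \<le> l' i" using le nu by auto
        also have "l' i \<le> 0 + theta_sum \<theta> \<nu>" using nu i unfolding goodset_def by auto
        finally show "l i \<le> 0 + theta_sum \<theta> \<nu>" .
      qed
      then have "\<not> Nset \<theta> U 0 l" unfolding Nset_def using nu by blast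
      then show ?thesis by simp
    qed simp
  qed
  have nf: "wsum U ?V ws (\<lambda>l. if Nset \<theta> U (theta_sum \<theta> {}) l then 1 else 0) = fpol \<theta> c U (theta_sum \<theta> {}) 1"
  proof (rule nsum_formula[OF finU _ Vf ws_tot _ refl])
    show "\<And>i. i \<in> U \<Longrightarrow> 0 \<le> \<theta> i" using pos by (simp add: less_imp_le)
    show "\<And>i \<mu>. i \<in> U \<Longrightarrow> \<mu> \<subseteq> U \<Longrightarrow> i \<in> \<mu> \<Longrightarrow>
        (\<Sum>v\<in>{v\<in>?V i. v \<le> theta_sum \<theta> \<mu>}. ws i v) = c i * theta_sum \<theta> \<mu>"
      by (rule ws_cdf) (auto simp: Tg_def)
  qed auto
  have t0: "theta_sum \<theta> {} = 0" by (simp add: theta_sum_def)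
  have fp: "fpol \<theta> c U 0 1 = 1 - (\<Sum>i\<in>U. \<theta> i * c i)" by (simp add: fpol_def)
  have one: "wsum U ?V ws (\<lambda>l. 1) = 1" using finU Vf ws_tot by (intro wsum_one) auto
  have "wsum U ?V ws (\<lambda>l. if Nset \<theta> U 0 l then 0 else 1) = wsum U ?V ws (\<lambda>l. 1 - (if Nset \<theta> U 0 l then 1 else 0))"
    by (intro arg_cong[where f="wsum U ?V ws"]) auto
  also have "\<dots> = (\<Sum>i\<in>U. \<theta> i * c i)" unfolding wsum_diff one using nf t0 fp by simp
  finally show ?thesis using repl by simp
qed



definition lev :: "nat set \<Rightarrow> (nat \<Rightarrow> real) \<Rightarrow> real \<Rightarrow> nat \<Rightarrow> real \<Rightarrow> real" where
  "lev U \<theta> x i y = Min ((\<lambda>t. if x / t < y then t else 2) ` Vg U \<theta> i)"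

context
  fixes U :: "nat set" and \<theta> :: "nat \<Rightarrow> real" and x :: real
  assumes finU: "finite U" and pos: "\<And>i. i \<in> U \<Longrightarrow> \<theta> i > 0" and tot: "theta_sum \<theta> U = 1"
    and x0: "x \<ge> 0"
begin

lemma Vg_fin: "i \<in> U \<Longrightarrow> finite (Vg U \<theta> i)"
  using Tg_props[OF finU pos tot] unfolding Vg_def by auto

lemma lev_in: "i \<in> U \<Longrightarrow> lev U \<theta> x i y \<in> Vg U \<theta> i"
proof -
  assume i: "i \<in> U"
  let ?f = "\<lambda>t. if x / t < y then t else 2"
  have "lev U \<theta> x i y \<in> ?f ` Vg U \<theta> i"
    unfolding lev_def using Vg_fin[OF i] by (intro Min_in) (auto simp: Vg_def)
  then obtain t where t: "t \<in> Vg U \<theta> i" "lev U \<theta> x i y = ?f t" by auto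
  then show ?thesis by (cases "x / t < y") (auto simp: Vg_def)
qed

lemma lev_le:
  assumes i: "i \<in> U" and t: "t \<in> Tg U \<theta> i"
  shows "lev U \<theta> x i y \<le> t \<longleftrightarrow> x / t < y"
proof
  let ?f = "\<lambda>t. if x / t < y then t else 2"
  have Tr: "\<And>s. s \<in> Tg U \<theta> i \<Longrightarrow> 0 < s \<and> s \<le> 1" using Tg_props[OF finU pos tot i] by blast
  assume le: "lev U \<theta> x i y \<le> t"
  have "lev U \<theta> x i y \<in> ?f ` Vg U \<theta> i"
    unfolding lev_def using Vg_fin[OF i] by (intro Min_in) (auto simp: Vg_def)
  then obtain t0 where t0: "t0 \<in> Vg U \<theta> i" "lev U \<theta> x i y = ?f t0" by auto
  have t1: "t \<le> 1" using Tr[OF t] by simp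
  have xt0: "x / t0 < y" and eq: "lev U \<theta> x i y = t0"
  proof -
    show "x / t0 < y" using le t0 t1 by (cases "x / t0 < y") auto
    then show "lev U \<theta> x i y = t0" using t0 by simp
  qed
  have "t0 \<noteq> 2" using eq le t1 by auto
  then have "t0 \<in> Tg U \<theta> i" using t0 unfolding Vg_def by auto
  then have t0p: "0 < t0" using Tr by auto
  have "t0 \<le> t" using eq le by simp
  then have "x / t \<le> x / t0" using x0 t0p by (intro divide_left_mono) auto
  then show "x / t < y" using xt0 by simp
next
  assume lt: "x / t < y"
  have "t \<in> Vg U \<theta> i" using t unfolding Vg_def by auto
  then have "lev U \<theta> x i y \<le> (if x / t < y then t else 2)"
    unfolding lev_def using Vg_fin[OF i] by (intro Min_le) auto
  then show "lev U \<theta> x i y \<le> t" using lt by simp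
qed

lemma lev_meas: "i \<in> U \<Longrightarrow> lev U \<theta> x i \<in> borel_measurable borel"
  unfolding lev_def[abs_def]
  by (intro borel_measurable_Min Vg_fin) auto


lemma prob_part:
  fixes M :: "'a measure" and X :: "nat \<Rightarrow> 'a \<Rightarrow> real"
  assumes P: "prob_space M" and Une: "U \<noteq> {}"
    and X_rv: "\<And>i. i \<in> U \<Longrightarrow> X i \<in> borel_measurable M"
    and X_indep: "prob_space.indep_vars M (\<lambda>_. borel) X U"
    and X_nonneg: "\<And>i. i \<in> U \<Longrightarrow> AE \<omega> in M. X i \<omega> \<ge> 0"
    and condP: "\<And>i \<mu>. i \<in> U \<Longrightarrow> i \<in> \<mu> \<Longrightarrow> \<mu> \<subseteq> U \<Longrightarrow>
        theta_sum \<theta> \<mu> * measure M {\<omega> \<in> space M. X i \<omega> > x}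
          \<le> measure M {\<omega> \<in> space M. X i \<omega> > x / theta_sum \<theta> \<mu>}"
  shows "(\<Sum>i\<in>U. \<theta> i * measure M {\<omega> \<in> space M. X i \<omega> > x})
           \<le> measure M {\<omega> \<in> space M. (\<Sum>i\<in>U. \<theta> i * X i \<omega>) > x}"
proof -
  interpret prob_space M by (rule P)
  let ?V = "Vg U \<theta>" and ?T = "Tg U \<theta>"
  let ?L = "\<lambda>i \<omega>. lev U \<theta> x i (X i \<omega>)"
  define w where "w = (\<lambda>i v. measure M {\<omega> \<in> space M. ?L i \<omega> = v})"
  define c where "c = (\<lambda>i. measure M {\<omega> \<in> space M. X i \<omega> > x})"
  have Lmeas: "\<And>i. i \<in> U \<Longrightarrow> ?L i \<in> borel_measurable M"
    using lev_meas X_rv by (auto intro: measurable_compose)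
  have Lsing: "\<And>i v. i \<in> U \<Longrightarrow> {\<omega> \<in> space M. ?L i \<omega> = v} \<in> sets M"
    using Lmeas by measurable
  have sumL: "(\<Sum>v\<in>S. w i v) = measure M {\<omega> \<in> space M. ?L i \<omega> \<in> S}" if i: "i \<in> U" and S: "finite S" for i S
  proof -
    have "measure M (\<Union>v\<in>S. {\<omega> \<in> space M. ?L i \<omega> = v}) = (\<Sum>v\<in>S. measure M {\<omega> \<in> space M. ?L i \<omega> = v})"
      using S Lsing[OF i] by (intro measure_finite_Union) (auto simp: disjoint_family_on_def)
    moreover have "(\<Union>v\<in>S. {\<omega> \<in> space M. ?L i \<omega> = v}) = {\<omega> \<in> space M. ?L i \<omega> \<in> S}" by auto
    ultimately show ?thesis unfolding w_def by simp
  qed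
  have wnn: "\<And>i v. w i v \<ge> 0" unfolding w_def by simp
  have wtot: "(\<Sum>v\<in>?V i. w i v) = 1" if i: "i \<in> U" for i
  proof -
    have "{\<omega> \<in> space M. ?L i \<omega> \<in> ?V i} = space M" using lev_in[OF i] by auto
    then show ?thesis using sumL[OF i Vg_fin[OF i]] by (simp add: prob_space)
  qed
  have wcdf: "(\<Sum>v\<in>{v\<in>?V i. v \<le> t}. w i v) = measure M {\<omega> \<in> space M. X i \<omega> > x / t}"
    if i: "i \<in> U" and t: "t \<in> ?T i" for i t
  proof -
    have "{\<omega> \<in> space M. ?L i \<omega> \<in> {v\<in>?V i. v \<le> t}} = {\<omega> \<in> space M. X i \<omega> > x / t}"
      using lev_in[OF i] lev_le[OF i t] by auto
    then show ?thesis using sumL[OF i] Vg_fin[OF i] by simp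
  qed
  have c01: "\<And>i. 0 \<le> c i \<and> c i \<le> 1" unfolding c_def by simp
  have wcdf2: "c i * t \<le> (\<Sum>v\<in>{v\<in>?V i. v \<le> t}. w i v)" if i: "i \<in> U" and t: "t \<in> ?T i" for i t
  proof -
    obtain \<mu> where mu: "\<mu> \<subseteq> U" "i \<in> \<mu>" "t = theta_sum \<theta> \<mu>" using t unfolding Tg_def by auto
    show ?thesis unfolding wcdf[OF i t] c_def using condP[OF i mu(2) mu(1)] mu(3) by (simp add: mult.commute)
  qed
  have fm: "(\<Sum>i\<in>U. \<theta> i * c i) \<le> wsum U ?V w (\<lambda>l. if Nset \<theta> U 0 l then 0 else 1)"
    using finite_main[OF finU pos tot, of c w] c01 wnn wtot wcdf2 by blast
  define E where "E = {\<omega> \<in> space M. \<not> Nset \<theta> U 0 (\<lambda>i. ?L i \<omega>)}"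
  define atom where "atom = (\<lambda>l. {\<omega> \<in> space M. \<forall>i\<in>U. ?L i \<omega> = l i})"
  let ?S = "{l \<in> PiE U ?V. \<not> Nset \<theta> U 0 l}"
  have finPi: "finite (PiE U ?V)" using finU Vg_fin by (intro finite_PiE) auto
  have atom_meas: "\<And>l. atom l = (\<Inter>i\<in>U. X i -` {y. lev U \<theta> x i y = l i} \<inter> space M)"
    unfolding atom_def using Une by auto
  have atom_prob: "measure M (atom l) = (\<Prod>i\<in>U. w i (l i))" for l
  proof -
    have "measure M (atom l) = (\<Prod>i\<in>U. measure M (X i -` {y. lev U \<theta> x i y = l i} \<inter> space M))"
      unfolding atom_meas
    proof (rule indep_varsD_finite[OF X_indep Une finU])
      fix i assume i: "i \<in> U"
      show "{y. lev U \<theta> x i y = l i} \<in> sets borel"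
        using lev_meas[OF i] by measurable
    qed
    also have "\<dots> = (\<Prod>i\<in>U. w i (l i))"
      unfolding w_def by (intro prod.cong refl arg_cong[where f="measure M"]) auto
    finally show ?thesis .
  qed
  have E_eq: "E = (\<Union>l\<in>?S. atom l)"
  proof
    show "E \<subseteq> (\<Union>l\<in>?S. atom l)"
    proof
      fix \<omega> assume om: "\<omega> \<in> E"
      let ?l = "restrict (\<lambda>i. ?L i \<omega>) U"
      have "?l \<in> PiE U ?V" using lev_in by auto
      moreover have "Nset \<theta> U 0 ?l = Nset \<theta> U 0 (\<lambda>i. ?L i \<omega>)" by (rule Nset_cong) simp
      ultimately have "?l \<in> ?S" using om unfolding E_def by auto
      moreover have "\<omega> \<in> atom ?l" using om unfolding atom_def E_def by auto
      ultimately show "\<omega> \<in> (\<Union>l\<in>?S. atom l)" by blast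
    qed
    show "(\<Union>l\<in>?S. atom l) \<subseteq> E"
    proof
      fix \<omega> assume "\<omega> \<in> (\<Union>l\<in>?S. atom l)"
      then obtain l where l: "l \<in> ?S" "\<omega> \<in> atom l" by auto
      have "Nset \<theta> U 0 l = Nset \<theta> U 0 (\<lambda>i. ?L i \<omega>)" by (rule Nset_cong) (use l in \<open>auto simp: atom_def\<close>)
      then show "\<omega> \<in> E" using l unfolding E_def atom_def by auto
    qed
  qed
  have atom_sets: "atom l \<in> sets M" for l
  proof -
    have "atom l = (\<Inter>i\<in>U. {\<omega> \<in> space M. ?L i \<omega> = l i})" unfolding atom_def using Une by auto
    then show ?thesis using Une finU Lsing by (auto intro!: sets.finite_INT)
  qed
  have "measure M E = (\<Sum>l\<in>?S. measure M (atom l))"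
    unfolding E_eq
  proof (rule measure_finite_Union)
    show "finite ?S" using finPi by simp
    show "atom ` ?S \<subseteq> sets M" using atom_sets by auto
    show "disjoint_family_on atom ?S"
    proof (unfold disjoint_family_on_def, intro ballI impI)
      fix l l' assume l: "l \<in> ?S" and l': "l' \<in> ?S" and ne: "l \<noteq> l'"
      then obtain i where i: "i \<in> U" "l i \<noteq> l' i"
        by (metis (mono_tags, lifting) PiE_ext mem_Collect_eq)
      then show "atom l \<inter> atom l' = {}" unfolding atom_def by auto
    qed
    show "\<And>l. l \<in> ?S \<Longrightarrow> emeasure M (atom l) \<noteq> \<infinity>" by simp
  qed
  also have "\<dots> = (\<Sum>l\<in>PiE U ?V. if \<not> Nset \<theta> U 0 l then measure M (atom l) else 0)"
    using finPi by (rule sum.inter_filter)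
  also have "\<dots> = (\<Sum>l\<in>PiE U ?V. measure M (atom l) * (if Nset \<theta> U 0 l then 0 else 1))"
    by (intro sum.cong) auto
  also have "\<dots> = wsum U ?V w (\<lambda>l. if Nset \<theta> U 0 l then 0 else 1)"
    unfolding wsum_def atom_prob ..
  finally have mE: "measure M E = wsum U ?V w (\<lambda>l. if Nset \<theta> U 0 l then 0 else 1)" .
  have "measure M E \<le> measure M {\<omega> \<in> space M. (\<Sum>i\<in>U. \<theta> i * X i \<omega>) > x}"
  proof (rule finite_measure_mono_AE)
    show "{\<omega> \<in> space M. (\<Sum>i\<in>U. \<theta> i * X i \<omega>) > x} \<in> sets M"
      using X_rv by measurable
    have "AE \<omega> in M. \<forall>i\<in>U. X i \<omega> \<ge> 0" using X_nonneg finU by (simp add: AE_finite_all)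
    then show "AE \<omega> in M. \<omega> \<in> E \<longrightarrow> \<omega> \<in> {\<omega> \<in> space M. (\<Sum>i\<in>U. \<theta> i * X i \<omega>) > x}"
    proof (rule AE_mp, intro AE_I2 impI)
      fix \<omega> assume nn: "\<forall>i\<in>U. X i \<omega> \<ge> 0" and om: "\<omega> \<in> E"
      then obtain \<nu> where nu: "\<nu> \<subseteq> U" "\<nu> \<noteq> {}" "goodset \<theta> 0 \<nu> (\<lambda>i. ?L i \<omega>)"
        unfolding E_def Nset_def by auto
      have fnu: "finite \<nu>" using finU nu by (auto intro: finite_subset)
      have tnu: "\<And>i. i \<in> \<nu> \<Longrightarrow> theta_sum \<theta> \<nu> \<in> ?T i" using nu unfolding Tg_def by auto
      have big: "\<And>i. i \<in> \<nu> \<Longrightarrow> x / theta_sum \<theta> \<nu> < X i \<omega>"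
      proof -
        fix i assume i: "i \<in> \<nu>"
        have "?L i \<omega> \<le> theta_sum \<theta> \<nu>" using nu i unfolding goodset_def by auto
        then show "x / theta_sum \<theta> \<nu> < X i \<omega>" using lev_le[of i "theta_sum \<theta> \<nu>" "X i \<omega>"] i nu tnu by auto
      qed
      have tpos: "theta_sum \<theta> \<nu> > 0" unfolding theta_sum_def using fnu nu pos
        by (intro sum_pos) auto
      have "(\<Sum>i\<in>\<nu>. \<theta> i * (x / theta_sum \<theta> \<nu>)) = theta_sum \<theta> \<nu> * (x / theta_sum \<theta> \<nu>)"
        unfolding theta_sum_def by (rule sum_distrib_right[symmetric])
      then have "x = (\<Sum>i\<in>\<nu>. \<theta> i * (x / theta_sum \<theta> \<nu>))" using tpos by simp
      also have "\<dots> < (\<Sum>i\<in>\<nu>. \<theta> i * X i \<omega>)"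
      proof (rule sum_strict_mono[OF fnu nu(2)])
        fix i assume i: "i \<in> \<nu>"
        show "\<theta> i * (x / theta_sum \<theta> \<nu>) < \<theta> i * X i \<omega>"
          using big[OF i] pos i nu(1) by (intro mult_strict_left_mono) auto
      qed
      also have "\<dots> \<le> (\<Sum>i\<in>U. \<theta> i * X i \<omega>)"
      proof (rule sum_mono2[OF finU nu(1)])
        fix b assume "b \<in> U - \<nu>"
        then have "0 \<le> \<theta> b" "0 \<le> X b \<omega>" using pos nn by (auto intro: less_imp_le)
        then show "0 \<le> \<theta> b * X b \<omega>" by simp
      qed
      finally show "\<omega> \<in> {\<omega> \<in> space M. (\<Sum>i\<in>U. \<theta> i * X i \<omega>) > x}" using om unfolding E_def by auto
    qed
  qed
  then show ?thesis using fm mE unfolding c_def by simp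
qed

end



lemma I_part:
  fixes M :: "'a measure" and X I :: "nat \<Rightarrow> 'a \<Rightarrow> real" and U :: "nat set"
  assumes P: "prob_space M" and finU: "finite U"
    and X_rv: "\<And>i. i \<in> U \<Longrightarrow> X i \<in> borel_measurable M"
    and I_rv: "\<And>i. i \<in> U \<Longrightarrow> I i \<in> borel_measurable M"
    and I_cat: "AE \<omega> in M. \<exists>i\<in>U. I i \<omega> = 1 \<and> (\<forall>j\<in>U. j \<noteq> i \<longrightarrow> I j \<omega> = 0)"
    and I_prob: "\<And>i. i \<in> U \<Longrightarrow> measure M {\<omega> \<in> space M. I i \<omega> = 1} = \<theta> i"
    and I_indep: "prob_space.indep_var M
        (PiM U (\<lambda>_. borel)) (\<lambda>\<omega>. \<lambda>i\<in>U. I i \<omega>)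
        (PiM U (\<lambda>_. borel)) (\<lambda>\<omega>. \<lambda>i\<in>U. X i \<omega>)"
  shows "measure M {\<omega> \<in> space M. (\<Sum>i\<in>U. I i \<omega> * X i \<omega>) > x}
           \<le> (\<Sum>i\<in>U. \<theta> i * measure M {\<omega> \<in> space M. X i \<omega> > x})"
proof -
  interpret prob_space M by (rule P)
  define A where "A = (\<lambda>k. {\<omega> \<in> space M. I k \<omega> = 1 \<and> X k \<omega> > x})"
  have Asets: "\<And>k. k \<in> U \<Longrightarrow> A k \<in> sets M"
    unfolding A_def using X_rv I_rv by measurable
  have "measure M {\<omega> \<in> space M. (\<Sum>i\<in>U. I i \<omega> * X i \<omega>) > x} \<le> measure M (\<Union>k\<in>U. A k)"
  proof (rule finite_measure_mono_AE)
    show "(\<Union>k\<in>U. A k) \<in> sets M" using Asets finU by auto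
    show "AE \<omega> in M. \<omega> \<in> {\<omega> \<in> space M. (\<Sum>i\<in>U. I i \<omega> * X i \<omega>) > x} \<longrightarrow> \<omega> \<in> (\<Union>k\<in>U. A k)"
      using I_cat
    proof (rule AE_mp, intro AE_I2 impI)
      fix \<omega> assume cat: "\<exists>i\<in>U. I i \<omega> = 1 \<and> (\<forall>j\<in>U. j \<noteq> i \<longrightarrow> I j \<omega> = 0)"
        and om: "\<omega> \<in> {\<omega> \<in> space M. (\<Sum>i\<in>U. I i \<omega> * X i \<omega>) > x}"
      then obtain k where k: "k \<in> U" "I k \<omega> = 1" "\<forall>j\<in>U. j \<noteq> k \<longrightarrow> I j \<omega> = 0" by auto
      have "(\<Sum>i\<in>U. I i \<omega> * X i \<omega>) = I k \<omega> * X k \<omega> + (\<Sum>i\<in>U - {k}. I i \<omega> * X i \<omega>)"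
        using finU k by (intro sum.remove)
      also have "(\<Sum>i\<in>U - {k}. I i \<omega> * X i \<omega>) = 0" using k by (intro sum.neutral) auto
      finally have "(\<Sum>i\<in>U. I i \<omega> * X i \<omega>) = X k \<omega>" using k by simp
      then show "\<omega> \<in> (\<Union>k\<in>U. A k)" using om k unfolding A_def by auto
    qed
  qed
  also have "\<dots> \<le> (\<Sum>k\<in>U. measure M (A k))"
    using Asets finU by (intro finite_measure_subadditive_finite) auto
  also have "\<dots> = (\<Sum>k\<in>U. \<theta> k * measure M {\<omega> \<in> space M. X k \<omega> > x})"
  proof (rule sum.cong[OF refl])
    fix k assume k: "k \<in> U"
    let ?IV = "\<lambda>\<omega>. \<lambda>i\<in>U. I i \<omega>" and ?XV = "\<lambda>\<omega>. \<lambda>i\<in>U. X i \<omega>"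
    let ?Sa = "(\<lambda>f. f k) -` {1} \<inter> space (PiM U (\<lambda>_. borel :: real measure))"
    let ?Sb = "(\<lambda>f. f k) -` {x<..} \<inter> space (PiM U (\<lambda>_. borel :: real measure))"
    have Sa: "?Sa \<in> sets (PiM U (\<lambda>_. borel))"
      using k by (intro measurable_sets[OF measurable_component_singleton]) auto
    have Sb: "?Sb \<in> sets (PiM U (\<lambda>_. borel))"
      using k by (intro measurable_sets[OF measurable_component_singleton]) auto
    have sp: "\<And>\<omega>. ?IV \<omega> \<in> space (PiM U (\<lambda>_. borel :: real measure))" "\<And>\<omega>. ?XV \<omega> \<in> space (PiM U (\<lambda>_. borel :: real measure))"
      by (auto simp: space_PiM)
    have "prob ((\<lambda>\<omega>. (?IV \<omega>, ?XV \<omega>)) -` (?Sa \<times> ?Sb) \<inter> space M) = prob (?IV -` ?Sa \<inter> space M) * prob (?XV -` ?Sb \<inter> space M)"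
      by (rule indep_varD[OF I_indep Sa Sb])
    moreover have "(\<lambda>\<omega>. (?IV \<omega>, ?XV \<omega>)) -` (?Sa \<times> ?Sb) \<inter> space M = A k"
      unfolding A_def using k sp by auto
    moreover have "?IV -` ?Sa \<inter> space M = {\<omega> \<in> space M. I k \<omega> = 1}"
      using k sp by auto
    moreover have "?XV -` ?Sb \<inter> space M = {\<omega> \<in> space M. X k \<omega> > x}"
      using k sp by auto
    ultimately show "measure M (A k) = \<theta> k * measure M {\<omega> \<in> space M. X k \<omega> > x}"
      using I_prob[OF k] by simp
  qed
  finally show ?thesis .
qed

theorem theorem2:
  fixes M :: "'a measure" and n :: nat
    and X :: "nat \<Rightarrow> 'a \<Rightarrow> real" and I :: "nat \<Rightarrow> 'a \<Rightarrow> real"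
    and \<theta> :: "nat \<Rightarrow> real"
  assumes P: "prob_space M"
    and n: "n \<ge> 2"
    and X_rv: "\<And>i. i \<in> {1..n} \<Longrightarrow> X i \<in> borel_measurable M"
    and X_indep: "prob_space.indep_vars M (\<lambda>_. borel) X {1..n}"
    and X_nonneg: "\<And>i. i \<in> {1..n} \<Longrightarrow> AE \<omega> in M. X i \<omega> \<ge> 0"
    and theta_range: "\<And>i. i \<in> {1..n} \<Longrightarrow> 0 < \<theta> i \<and> \<theta> i < 1"
    and theta_sum1: "(\<Sum>i=1..n. \<theta> i) = 1"
    and I_rv: "\<And>i. i \<in> {1..n} \<Longrightarrow> I i \<in> borel_measurable M"
    and I_cat: "AE \<omega> in M. \<exists>i\<in>{1..n}. I i \<omega> = 1 \<and> (\<forall>j\<in>{1..n}. j \<noteq> i \<longrightarrow> I j \<omega> = 0)"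
    and I_prob: "\<And>i. i \<in> {1..n} \<Longrightarrow> measure M {\<omega> \<in> space M. I i \<omega> = 1} = \<theta> i"
    and I_indep: "prob_space.indep_var M
        (PiM {1..n} (\<lambda>_. borel)) (\<lambda>\<omega>. \<lambda>i\<in>{1..n}. I i \<omega>)
        (PiM {1..n} (\<lambda>_. borel)) (\<lambda>\<omega>. \<lambda>i\<in>{1..n}. X i \<omega>)"
    and cond: "\<And>i \<mu> x. i \<in> {1..n} \<Longrightarrow> i \<in> \<mu> \<Longrightarrow> \<mu> \<subset> {1..n} \<Longrightarrow> x \<ge> 0 \<Longrightarrow>
        theta_sum \<theta> \<mu> * measure M {\<omega> \<in> space M. X i \<omega> > x}
          \<le> measure M {\<omega> \<in> space M. X i \<omega> > x / theta_sum \<theta> \<mu>}"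
  shows "\<forall>x::real. measure M {\<omega> \<in> space M. (\<Sum>i=1..n. I i \<omega> * X i \<omega>) > x}
                 \<le> measure M {\<omega> \<in> space M. (\<Sum>i=1..n. \<theta> i * X i \<omega>) > x}"
proof
  fix x :: real
  interpret prob_space M by (rule P)
  let ?U = "{1..n}"
  have finU: "finite ?U" by simp
  have Une: "?U \<noteq> {}" using n by auto
  have pos: "\<And>i. i \<in> ?U \<Longrightarrow> \<theta> i > 0" using theta_range by auto
  have tot: "theta_sum \<theta> ?U = 1" using theta_sum1 unfolding theta_sum_def by simp
  have LHS: "measure M {\<omega> \<in> space M. (\<Sum>i=1..n. I i \<omega> * X i \<omega>) > x}
      \<le> (\<Sum>i\<in>?U. \<theta> i * measure M {\<omega> \<in> space M. X i \<omega> > x})"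
    by (rule I_part[OF P finU X_rv I_rv I_cat I_prob I_indep])
  show "measure M {\<omega> \<in> space M. (\<Sum>i=1..n. I i \<omega> * X i \<omega>) > x}
      \<le> measure M {\<omega> \<in> space M. (\<Sum>i=1..n. \<theta> i * X i \<omega>) > x}"
  proof (cases "x \<ge> 0")
    case True
    have "(\<Sum>i\<in>?U. \<theta> i * measure M {\<omega> \<in> space M. X i \<omega> > x})
        \<le> measure M {\<omega> \<in> space M. (\<Sum>i\<in>?U. \<theta> i * X i \<omega>) > x}"
    proof (rule prob_part[OF finU pos tot True P Une X_rv X_indep X_nonneg])
      fix i \<mu> assume i: "i \<in> ?U" and imu: "i \<in> \<mu>" and mu: "\<mu> \<subseteq> ?U"
      show "theta_sum \<theta> \<mu> * measure M {\<omega> \<in> space M. X i \<omega> > x}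
          \<le> measure M {\<omega> \<in> space M. X i \<omega> > x / theta_sum \<theta> \<mu>}"
      proof (cases "\<mu> = ?U")
        case True
        then show ?thesis using tot by simp
      next
        case False
        then have "\<mu> \<subset> ?U" using mu by auto
        then show ?thesis using cond[OF i imu _ True] by simp
      qed
    qed (auto)
    then show ?thesis using LHS by simp
  next
    case False
    have "measure M {\<omega> \<in> space M. (\<Sum>i=1..n. I i \<omega> * X i \<omega>) > x} \<le> 1" by simp
    also have "1 = measure M (space M)" by (simp add: prob_space)
    also have "measure M (space M) \<le> measure M {\<omega> \<in> space M. (\<Sum>i=1..n. \<theta> i * X i \<omega>) > x}"
    proof (rule finite_measure_mono_AE)
      show "{\<omega> \<in> space M. (\<Sum>i=1..n. \<theta> i * X i \<omega>) > x} \<in> sets M"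
        using X_rv by measurable
      have "AE \<omega> in M. \<forall>i\<in>?U. X i \<omega> \<ge> 0" using X_nonneg finU by (simp add: AE_finite_all)
      then show "AE \<omega> in M. \<omega> \<in> space M \<longrightarrow> \<omega> \<in> {\<omega> \<in> space M. (\<Sum>i=1..n. \<theta> i * X i \<omega>) > x}"
      proof (rule AE_mp, intro AE_I2 impI)
        fix \<omega> assume nn: "\<forall>i\<in>?U. X i \<omega> \<ge> 0" and om: "\<omega> \<in> space M"
        have "0 \<le> (\<Sum>i=1..n. \<theta> i * X i \<omega>)"
        proof (rule sum_nonneg)
          fix i assume "i \<in> ?U"
          then have "0 \<le> \<theta> i" "0 \<le> X i \<omega>" using nn pos by (auto intro: less_imp_le)
          then show "0 \<le> \<theta> i * X i \<omega>" by simp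
        qed
        then show "\<omega> \<in> {\<omega> \<in> space M. (\<Sum>i=1..n. \<theta> i * X i \<omega>) > x}" using om False by auto
      qed
    qed
    finally show ?thesis .
  qed
qed

end
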